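(* Let $\mathcal L$ and $\mathcal L'$ be cabled linkages in $\mathbb R^n$ which are (strongly) functional for $f\colon(\mathbb R^n)^k\to(\mathbb R^n)^m$ and $g\colon(\mathbb R^n)^m\to(\mathbb R^n)^\ell$, with restricted domains $U$ and $U'$ respectively, and suppose $U\cap f^{-1}(U')\ne\emptyset$. Form $\mathcal L''$ by taking the disjoint union of $\mathcal L$ and $\mathcal L'$ and identifying the $i$-th output vertex of $\mathcal L$ with the $i$-th input vertex of $\mathcal L'$ for each $i=1,\dots,m$. Then $\mathcal L''$ is a (strongly) functional linkage for $g\circ f$ with restricted domain $U\cap f^{-1}(U')$, with input vertices those of $\mathcal L$ and output vertices those of $\mathcal L'$.
   Context: A cabled linkage in $\mathbb R^n$ is $\mathcal L=(L,\ell,V,\mu,F)$: $L$ a finite one-dimensional simplicial complex (vertex set $\mathcal V(L)$, edge set $\mathcal E(L)$), $\ell\colon\mathcal E(L)\to(0,\infty)$, $V\subset\mathcal V(L)$ fixed vertices, $\mu\colon V\to\mathbb R^n$, $F\subset\mathcal E(L)$ flexible edges. $\mathcal C(\mathcal L)=\{\varphi\colon\mathcal V(L)\to\mathbb R^n\mid\varphi(v)=\mu(v)\ (v\in V),\ |\varphi(v)-\varphi(w)|\le\ell(vw)\ (vw\in F),\ |\varphi(v)-\varphi(w)|=\ell(vw)\ (vw\in\mathcal E(L)\setminus F)\}$. $\mathcal L$ is quasifunctional for $f\colon(\mathbb R^n)^k\to(\mathbb R^n)^m$ if there are vertices $w_1,\dots,w_k$ (input) and $v_1,\dots,v_m$ (output),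 repetitions allowed, with input map $q(\varphi)=(\varphi(w_1),\dots,\varphi(w_k))$, output map $p(\varphi)=(\varphi(v_1),\dots,\varphi(v_m))$ and $p=f\circ q$; its domain is $q(\mathcal C(\mathcal L))$. It is functional with restricted domain $U\subset q(\mathcal C(\mathcal L))$ if there are a finite set $E$ and an analytic isomorphism $\sigma\colon U\times E\to q^{-1}(U)$ with $q(\sigma(u,c))=u$; strongly functional if $q\colon\mathcal C(\mathcal L)\to q(\mathcal C(\mathcal L))$ is an analytic isomorphism, and strongly functional with restricted domain $U$ if also $U\subset q(\mathcal C(\mathcal L))$. An analytic isomorphism is a homeomorphism $h$ with $h,h^{-1}$ restrictions of analytic maps. *)

theory Defs
  imports "HOL-Analysis.Analysis"
begin

text \<open>Points of a space (R^n)^I (I a finite index set, R^n modelled by a Euclidean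
  space type 'a) are represented by functions 'i => 'a vanishing outside I.\<close>

definition coord_space :: "'i set \<Rightarrow> ('i \<Rightarrow> 'a::real_normed_vector) set" where
  "coord_space I = {x. \<forall>i. i \<notin> I \<longrightarrow> x i = 0}"

definition multi_indices :: "'k set \<Rightarrow> ('k \<Rightarrow> nat) set" where
  "multi_indices K = {\<alpha>. \<forall>p. p \<notin> K \<longrightarrow> \<alpha> p = 0}"

definition monomial :: "'i set \<Rightarrow> ('i \<times> 'a \<Rightarrow> nat) \<Rightarrow> ('i \<Rightarrow> 'a::euclidean_space) \<Rightarrow> real" where
  "monomial I \<alpha> h = (\<Prod>p\<in>I \<times> Basis. (h (fst p) \<bullet> snd p) ^ \<alpha> p)"

definition real_analytic_at ::
  "'i set \<Rightarrow> 'j set \<Rightarrow> (('i \<Rightarrow> 'a::euclidean_space) \<Rightarrow> ('j \<Rightarrow> 'a)) \<Rightarrow> ('i \<Rightarrow> 'a) \<Rightarrow> bool" where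
  "real_analytic_at I J F x \<longleftrightarrow>
     (\<exists>r>0. \<exists>c :: ('i \<times> 'a \<Rightarrow> nat) \<Rightarrow> 'j \<Rightarrow> 'a.
        \<forall>h\<in>coord_space I. (\<forall>i\<in>I. norm (h i) < r) \<longrightarrow>
          (\<forall>j\<in>J. ((\<lambda>\<alpha>. monomial I \<alpha> h *\<^sub>R c \<alpha> j) has_sum F (\<lambda>i. x i + h i) j)
                     (multi_indices (I \<times> Basis))))"

definition open_in_coords :: "'i set \<Rightarrow> ('i \<Rightarrow> 'a::real_normed_vector) set \<Rightarrow> bool" where
  "open_in_coords I W \<longleftrightarrow> W \<subseteq> coord_space I \<and>
     (\<forall>x\<in>W. \<exists>r>0. \<forall>h\<in>coord_space I. (\<forall>i\<in>I. norm (h i) < r) \<longrightarrow> (\<lambda>i. x i + h i) \<in> W)"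

definition analytic_restriction ::
  "'i set \<Rightarrow> 'j set \<Rightarrow> (('i \<Rightarrow> 'a::euclidean_space) \<Rightarrow> ('j \<Rightarrow> 'a)) \<Rightarrow> ('i \<Rightarrow> 'a) set \<Rightarrow> bool" where
  "analytic_restriction I J f A \<longleftrightarrow>
     (\<exists>W F. open_in_coords I W \<and> A \<subseteq> W \<and> (\<forall>x\<in>W. real_analytic_at I J F x) \<and>
            (\<forall>x\<in>A. f x = F x))"

definition analytic_iso ::
  "'i set \<Rightarrow> 'j set \<Rightarrow> (('i \<Rightarrow> 'a::euclidean_space) \<Rightarrow> ('j \<Rightarrow> 'a)) \<Rightarrow> ('i \<Rightarrow> 'a) set \<Rightarrow> ('j \<Rightarrow> 'a) set \<Rightarrow> bool" where
  "analytic_iso I J h A B \<longleftrightarrow>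
     (\<exists>h'. homeomorphism A B h h' \<and> analytic_restriction I J h A \<and> analytic_restriction J I h' B)"

text \<open>Edges are given by an edge set with endpoint pairs (so that glued linkages, which
  may acquire parallel edges or loops, are still representable).\<close>
record ('v, 'e, 'a) linkage =
  verts :: "'v set"
  edges :: "'e set"
  ends  :: "'e \<Rightarrow> 'v \<times> 'v"
  len   :: "'e \<Rightarrow> real"
  fixed :: "'v set"
  pos   :: "'v \<Rightarrow> 'a"
  flex  :: "'e set"

definition cabled_linkage :: "('v, 'e, 'a) linkage \<Rightarrow> bool" where
  "cabled_linkage L \<longleftrightarrow>
     finite (verts L) \<and> finite (edges L) \<and>
     (\<forall>e\<in>edges L. fst (ends L e) \<in> verts L \<and> snd (ends L e) \<in> verts L \<and>
                   fst (ends L e) \<noteq> snd (ends L e) \<and> len L e > 0) \<and>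
     (\<forall>e\<in>edges L. \<forall>e'\<in>edges L.
        {fst (ends L e), snd (ends L e)} = {fst (ends L e'), snd (ends L e')} \<longrightarrow> e = e') \<and>
     fixed L \<subseteq> verts L \<and> flex L \<subseteq> edges L"

definition config_space :: "('v, 'e, 'a::real_normed_vector) linkage \<Rightarrow> ('v \<Rightarrow> 'a) set" where
  "config_space L = {\<phi>.
     (\<forall>v. v \<notin> verts L \<longrightarrow> \<phi> v = 0) \<and>
     (\<forall>v\<in>fixed L. \<phi> v = pos L v) \<and>
     (\<forall>e\<in>flex L. dist (\<phi> (fst (ends L e))) (\<phi> (snd (ends L e))) \<le> len L e) \<and>
     (\<forall>e\<in>edges L - flex L. dist (\<phi> (fst (ends L e))) (\<phi> (snd (ends L e))) = len L e)}"

text \<open>Input/output map for a list of vertices w_1..w_k: phi |-> (phi w_1, ..., phi w_k),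
  a point of (R^n)^k represented as a function on {..<k}.\<close>
definition tuple_map :: "'v list \<Rightarrow> ('v \<Rightarrow> 'a::zero) \<Rightarrow> nat \<Rightarrow> 'a" where
  "tuple_map ws \<phi> = (\<lambda>i. if i < length ws then \<phi> (ws ! i) else 0)"

definition quasifunctional ::
  "('v, 'e, 'a::real_normed_vector) linkage \<Rightarrow> 'v list \<Rightarrow> 'v list \<Rightarrow> ((nat \<Rightarrow> 'a) \<Rightarrow> (nat \<Rightarrow> 'a)) \<Rightarrow> bool" where
  "quasifunctional L ws vs f \<longleftrightarrow>
     set ws \<subseteq> verts L \<and> set vs \<subseteq> verts L \<and>
     (\<forall>\<phi>\<in>config_space L. tuple_map vs \<phi> = f (tuple_map ws \<phi>))"

text \<open>The finite set E carries the discrete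
  topology; an analytic map on U x E is one analytic in u for each fixed c, and an
  analytic map into the discrete set E is a locally constant (= continuous) one, so
  the analytic isomorphism sigma : U x E -> q^-1(U) is: a homeomorphism whose
  components sigma(-,c) and whose inverse's U-component are restrictions of analytic maps.\<close>
definition functional_on ::
  "('v, 'e, 'a::euclidean_space) linkage \<Rightarrow> 'v list \<Rightarrow> 'v list \<Rightarrow> ((nat \<Rightarrow> 'a) \<Rightarrow> (nat \<Rightarrow> 'a))
     \<Rightarrow> (nat \<Rightarrow> 'a) set \<Rightarrow> bool" where
  "functional_on L ws vs f U \<longleftrightarrow>
     quasifunctional L ws vs f \<and> U \<subseteq> tuple_map ws ` config_space L \<and>
     (\<exists>E :: nat set. \<exists>\<sigma> :: (nat \<Rightarrow> 'a) \<Rightarrow> nat \<Rightarrow> ('v \<Rightarrow> 'a). \<exists>\<sigma>'.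
        finite E \<and>
        homeomorphism (U \<times> E) {\<phi> \<in> config_space L. tuple_map ws \<phi> \<in> U} (\<lambda>(u, c). \<sigma> u c) \<sigma>' \<and>
        (\<forall>u\<in>U. \<forall>c\<in>E. tuple_map ws (\<sigma> u c) = u) \<and>
        (\<forall>c\<in>E. analytic_restriction {..<length ws} (verts L) (\<lambda>u. \<sigma> u c) U) \<and>
        analytic_restriction (verts L) {..<length ws} (fst \<circ> \<sigma>')
          {\<phi> \<in> config_space L. tuple_map ws \<phi> \<in> U})"

definition strongly_functional_on ::
  "('v, 'e, 'a::euclidean_space) linkage \<Rightarrow> 'v list \<Rightarrow> 'v list \<Rightarrow> ((nat \<Rightarrow> 'a) \<Rightarrow> (nat \<Rightarrow> 'a))
     \<Rightarrow> (nat \<Rightarrow> 'a) set \<Rightarrow> bool" where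
  "strongly_functional_on L ws vs f U \<longleftrightarrow>
     quasifunctional L ws vs f \<and> U \<subseteq> tuple_map ws ` config_space L \<and>
     analytic_iso (verts L) {..<length ws} (tuple_map ws) (config_space L)
       (tuple_map ws ` config_space L)"

definition glue_rel :: "('v, 'e, 'a) linkage \<Rightarrow> ('w, 'f, 'a) linkage \<Rightarrow> 'v list \<Rightarrow> 'w list
    \<Rightarrow> (('v + 'w) \<times> ('v + 'w)) set" where
  "glue_rel L L' vs ws' =
     (let S = {(Inl (vs ! i), Inr (ws' ! i)) | i. i < length vs}
      in Id_on (verts L <+> verts L') \<union> (S \<union> S\<inverse>)\<^sup>+)"

definition glue :: "('v, 'e, 'a) linkage \<Rightarrow> ('w, 'f, 'a) linkage \<Rightarrow> 'v list \<Rightarrow> 'w list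
    \<Rightarrow> (('v + 'w) set, 'e + 'f, 'a) linkage" where
  "glue L L' vs ws' =
     (let R = glue_rel L L' vs ws'; cls = (\<lambda>x. R `` {x}); Fx = fixed L <+> fixed L'
      in \<lparr> verts = (verts L <+> verts L') // R,
           edges = edges L <+> edges L',
           ends = case_sum (\<lambda>e. (cls (Inl (fst (ends L e))), cls (Inl (snd (ends L e)))))
                           (\<lambda>e. (cls (Inr (fst (ends L' e))), cls (Inr (snd (ends L' e))))),
           len = case_sum (len L) (len L'),
           fixed = {X \<in> (verts L <+> verts L') // R. X \<inter> Fx \<noteq> {}},
           pos = (\<lambda>X. case_sum (pos L) (pos L') (SOME x. x \<in> X \<inter> Fx)),
           flex = flex L <+> flex L' \<rparr>)"

definition glue_inputs :: "('v, 'e, 'a) linkage \<Rightarrow> ('w, 'f, 'a) linkage \<Rightarrow> 'v list \<Rightarrow> 'w list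
    \<Rightarrow> 'v list \<Rightarrow> ('v + 'w) set list" where
  "glue_inputs L L' vs ws' ws = map (\<lambda>v. glue_rel L L' vs ws' `` {Inl v}) ws"

definition glue_outputs :: "('v, 'e, 'a) linkage \<Rightarrow> ('w, 'f, 'a) linkage \<Rightarrow> 'v list \<Rightarrow> 'w list
    \<Rightarrow> 'w list \<Rightarrow> ('v + 'w) set list" where
  "glue_outputs L L' vs ws' vs' = map (\<lambda>w. glue_rel L L' vs ws' `` {Inr w}) vs'"

end

theory Submission
  imports Defs
begin

definition pmono :: "'p set \<Rightarrow> ('p \<Rightarrow> nat) \<Rightarrow> ('p \<Rightarrow> real) \<Rightarrow> real" where
  "pmono P \<alpha> t = (\<Prod>p\<in>P. t p ^ \<alpha> p)"

definition pdeg :: "'p set \<Rightarrow> ('p \<Rightarrow> nat) \<Rightarrow> nat" where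
  "pdeg P \<alpha> = (\<Sum>p\<in>P. \<alpha> p)"

lemma pmono_const: "pmono P \<alpha> (\<lambda>_. c) = c ^ pdeg P \<alpha>"
  by (simp add: pmono_def pdeg_def power_sum)

lemma pmono_abs: "\<bar>pmono P \<alpha> t\<bar> = pmono P \<alpha> (\<lambda>p. \<bar>t p\<bar>)"
  by (simp add: pmono_def abs_prod power_abs)

lemma pmono_le:
  assumes "\<And>p. p \<in> P \<Longrightarrow> \<bar>t p\<bar> \<le> c"
  shows "\<bar>pmono P \<alpha> t\<bar> \<le> c ^ pdeg P \<alpha>"
proof -
  have "\<bar>pmono P \<alpha> t\<bar> = (\<Prod>p\<in>P. \<bar>t p\<bar> ^ \<alpha> p)"
    by (simp add: pmono_def abs_prod power_abs)
  also have "\<dots> \<le> (\<Prod>p\<in>P. c ^ \<alpha> p)"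
    by (intro prod_mono conjI power_mono assms) auto
  also have "\<dots> = c ^ pdeg P \<alpha>"
    by (simp add: pdeg_def power_sum)
  finally show ?thesis .
qed

lemma pmono_zero_idx[simp]: "pmono P (\<lambda>_. 0) t = 1"
  by (simp add: pmono_def)

lemma mi_nonzero_pdeg:
  assumes "finite P" "\<alpha> \<in> multi_indices P" "\<alpha> \<noteq> (\<lambda>_. 0)"
  shows "pdeg P \<alpha> \<ge> 1"
proof -
  obtain p where "\<alpha> p \<noteq> 0" using assms(3) by auto
  then have "p \<in> P" using assms(2) by (auto simp: multi_indices_def)
  then have "\<alpha> p \<le> pdeg P \<alpha>" unfolding pdeg_def
    using assms(1) by (intro member_le_sum) auto
  then show ?thesis using \<open>\<alpha> p \<noteq> 0\<close> by simp
qed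

lemma pmono_at0:
  assumes "finite P" "\<alpha> \<in> multi_indices P" "\<alpha> \<noteq> (\<lambda>_. 0)"
  shows "pmono P \<alpha> (\<lambda>_. 0) = 0"
  using mi_nonzero_pdeg[OF assms] by (simp add: pmono_const)

lemma pmono_sum_idx:
  assumes "finite K"
  shows "pmono P (\<lambda>p. \<Sum>k\<in>K. \<sigma> k p) t = (\<Prod>k\<in>K. pmono P (\<sigma> k) t)"
  unfolding pmono_def by (simp add: power_sum prod.swap[of _ K])

lemma prod_PiE_has_sum_nonneg:
  fixes f :: "'a \<Rightarrow> 'b \<Rightarrow> real"
  assumes "finite A"
    and "\<And>x. x \<in> A \<Longrightarrow> (f x has_sum S x) (B x)"
    and "\<And>x y. x \<in> A \<Longrightarrow> y \<in> B x \<Longrightarrow> f x y \<ge> 0"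
  shows "((\<lambda>g. \<Prod>x\<in>A. f x (g x)) has_sum (\<Prod>x\<in>A. S x)) (PiE A B)"
  using assms
proof (induction A rule: finite_induct)
  case empty
  then show ?case by (auto simp: PiE_empty_domain intro: has_sum_finiteI)
next
  case (insert x A)
  have pi: "PiE (insert x A) B = (\<lambda>(g,y). g(x:=y)) ` (PiE A B \<times> B x)"
    unfolding PiE_insert_eq
    by (subst swap_product [symmetric]) (simp add: image_image case_prod_unfold)
  have inj: "inj_on (\<lambda>(g, y). g(x := y)) (PiE A B \<times> B x)"
    using \<open>x \<notin> A\<close> by (rule inj_combinator')
  have IH: "((\<lambda>g. \<Prod>x\<in>A. f x (g x)) has_sum (\<Prod>x\<in>A. S x)) (PiE A B)"
    using insert by auto
  have fx: "(f x has_sum S x) (B x)" using insert by auto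
  have eq: "((\<lambda>g. \<Prod>x\<in>insert x A. f x (g x)) \<circ> (\<lambda>(g,y). g(x:=y))) =
             (\<lambda>(p, y). (\<Prod>x'\<in>A. f x' (p x')) * f x y)"
  proof -
    have "(\<Prod>z\<in>A. f z ((g(x := y)) z)) = (\<Prod>z\<in>A. f z (g z))" for g y
      using insert.hyps by (intro prod.cong) auto
    then show ?thesis using insert.hyps by (auto simp: fun_eq_iff mult.commute)
  qed
  have nn: "0 \<le> (\<Prod>x'\<in>A. f x' (p x'))" if "p \<in> PiE A B" for p
    using that insert.prems(2) by (intro prod_nonneg) (auto simp: PiE_def Pi_def)
  have inner: "((\<lambda>y. (\<Prod>x'\<in>A. f x' (p x')) * f x y) has_sum (\<Prod>x'\<in>A. f x' (p x')) * S x) (B x)"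
    for p using has_sum_cmult_right[OF fx] by blast
  have outer: "((\<lambda>p. (\<Prod>x'\<in>A. f x' (p x')) * S x) has_sum (\<Prod>x\<in>A. S x) * S x) (PiE A B)"
    using has_sum_cmult_left[OF IH] by blast
  have summ: "(\<lambda>(p, y). (\<Prod>x'\<in>A. f x' (p x')) * f x y) summable_on (PiE A B \<times> B x)"
    apply (rule summable_on_SigmaI[OF _ has_sum_imp_summable[OF outer]])
    using inner apply simp
    using nn insert.prems(2) by (auto intro!: mult_nonneg_nonneg)
  have "((\<lambda>(p, y). (\<Prod>x'\<in>A. f x' (p x')) * f x y) has_sum (\<Prod>x\<in>A. S x) * S x) (PiE A B \<times> B x)"
    by (rule has_sum_SigmaI[OF _ outer summ]) (use inner in simp)
  then have "((\<lambda>g. \<Prod>x\<in>insert x A. f x (g x)) has_sum (\<Prod>x\<in>A. S x) * S x) (PiE (insert x A) B)"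
    unfolding pi by (subst has_sum_reindex[OF inj]) (simp add: eq)
  then show ?case using insert.hyps by (simp add: mult.commute)
qed

lemma prod_PiE_has_sum_abs:
  fixes f :: "'a \<Rightarrow> 'b \<Rightarrow> real"
  assumes "finite A"
    and "\<And>x. x \<in> A \<Longrightarrow> (\<lambda>y. norm (f x y)) summable_on (B x)"
  shows "((\<lambda>g. \<Prod>x\<in>A. f x (g x)) has_sum (\<Prod>x\<in>A. infsum (f x) (B x))) (PiE A B)"
    and "((\<lambda>g. \<Prod>x\<in>A. \<bar>f x (g x)\<bar>) has_sum (\<Prod>x\<in>A. infsum (\<lambda>y. \<bar>f x y\<bar>) (B x))) (PiE A B)"
proof -
  show n: "((\<lambda>g. \<Prod>x\<in>A. \<bar>f x (g x)\<bar>) has_sum (\<Prod>x\<in>A. infsum (\<lambda>y. \<bar>f x y\<bar>) (B x))) (PiE A B)"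
    by (rule prod_PiE_has_sum_nonneg[OF assms(1)]) (use assms(2) in auto)
  have ab: "(\<lambda>g. norm (\<Prod>x\<in>A. f x (g x))) summable_on (PiE A B)"
    using has_sum_imp_summable[OF n] by (simp add: abs_prod)
  have sm: "(\<lambda>g. \<Prod>x\<in>A. f x (g x)) summable_on (PiE A B)"
    by (rule abs_summable_summable[OF ab])
  show "((\<lambda>g. \<Prod>x\<in>A. f x (g x)) has_sum (\<Prod>x\<in>A. infsum (f x) (B x))) (PiE A B)"
  proof -
    have "infsum (\<lambda>g. \<Prod>x\<in>A. f x (g x)) (PiE A B) = (\<Prod>x\<in>A. infsum (f x) (B x))"
      by (rule infsum_prod_PiE_abs[OF assms])
    then show ?thesis using has_sum_infsum[OF sm] by simp
  qed
qed

lemma ps_abs_summable: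
  assumes hs: "\<And>t. (\<forall>p\<in>P. \<bar>t p\<bar> < r) \<Longrightarrow> ((\<lambda>\<alpha>. a \<alpha> * pmono P \<alpha> t) has_sum u t) (multi_indices P)"
    and "0 \<le> \<tau>" "\<tau> < r"
  shows "(\<lambda>\<alpha>. \<bar>a \<alpha>\<bar> * \<tau> ^ pdeg P \<alpha>) summable_on multi_indices P"
proof -
  have "((\<lambda>\<alpha>. a \<alpha> * pmono P \<alpha> (\<lambda>_. \<tau>)) has_sum u (\<lambda>_. \<tau>)) (multi_indices P)"
    by (rule hs) (use assms in auto)
  then have "(\<lambda>\<alpha>. a \<alpha> * \<tau> ^ pdeg P \<alpha>) summable_on multi_indices P"
    unfolding pmono_const by (rule has_sum_imp_summable)
  then have "(\<lambda>\<alpha>. norm (a \<alpha> * \<tau> ^ pdeg P \<alpha>)) summable_on multi_indices P"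
    by (subst (asm) summable_on_iff_abs_summable_on_real)
  moreover have "norm (a \<alpha> * \<tau> ^ pdeg P \<alpha>) = \<bar>a \<alpha>\<bar> * \<tau> ^ pdeg P \<alpha>" for \<alpha>
    using \<open>0 \<le> \<tau>\<close> by (simp add: abs_mult)
  ultimately show ?thesis by simp
qed

lemma ps_major:
  assumes fP: "finite P"
    and hs: "\<And>t. (\<forall>p\<in>P. \<bar>t p\<bar> < r) \<Longrightarrow> ((\<lambda>\<alpha>. a \<alpha> * pmono P \<alpha> t) has_sum u t) (multi_indices P)"
    and a0: "a (\<lambda>_. 0) = 0" and "0 < \<tau>" "\<tau> < r" "0 \<le> \<epsilon>" "\<epsilon> \<le> 1"
    and t: "\<forall>p\<in>P. \<bar>t p\<bar> \<le> \<epsilon> * \<tau>"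
  shows "(\<lambda>\<alpha>. \<bar>a \<alpha> * pmono P \<alpha> t\<bar>) summable_on multi_indices P"
    and "infsum (\<lambda>\<alpha>. \<bar>a \<alpha> * pmono P \<alpha> t\<bar>) (multi_indices P)
           \<le> \<epsilon> * infsum (\<lambda>\<alpha>. \<bar>a \<alpha>\<bar> * \<tau> ^ pdeg P \<alpha>) (multi_indices P)"
proof -
  have S: "(\<lambda>\<alpha>. \<bar>a \<alpha>\<bar> * \<tau> ^ pdeg P \<alpha>) summable_on multi_indices P"
    using assms by (intro ps_abs_summable[OF hs]) auto
  have S': "(\<lambda>\<alpha>. \<epsilon> * (\<bar>a \<alpha>\<bar> * \<tau> ^ pdeg P \<alpha>)) summable_on multi_indices P"
    by (rule summable_on_cmult_right[OF S])
  have bound: "\<bar>a \<alpha> * pmono P \<alpha> t\<bar> \<le> \<epsilon> * (\<bar>a \<alpha>\<bar> * \<tau> ^ pdeg P \<alpha>)"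
    if "\<alpha> \<in> multi_indices P" for \<alpha>
  proof (cases "\<alpha> = (\<lambda>_. 0)")
    case True
    then show ?thesis using a0 by simp
  next
    case False
    have d: "pdeg P \<alpha> \<ge> 1" by (rule mi_nonzero_pdeg[OF fP that False])
    have "\<bar>pmono P \<alpha> t\<bar> \<le> (\<epsilon> * \<tau>) ^ pdeg P \<alpha>"
      using t by (intro pmono_le) auto
    also have "\<dots> = \<epsilon> ^ pdeg P \<alpha> * \<tau> ^ pdeg P \<alpha>" by (simp add: power_mult_distrib)
    also have "\<dots> \<le> \<epsilon> * \<tau> ^ pdeg P \<alpha>"
    proof -
      obtain n where n: "pdeg P \<alpha> = Suc n" using d by (cases "pdeg P \<alpha>") auto
      have "\<epsilon> ^ pdeg P \<alpha> = \<epsilon> * \<epsilon> ^ (pdeg P \<alpha> - 1)"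
        using n by simp
      also have "\<dots> \<le> \<epsilon> * 1"
        using assms by (intro mult_left_mono power_le_one) auto
      finally show ?thesis using \<open>0 < \<tau>\<close> by (intro mult_right_mono) auto
    qed
    finally have "\<bar>pmono P \<alpha> t\<bar> \<le> \<epsilon> * \<tau> ^ pdeg P \<alpha>" .
    then have "\<bar>a \<alpha>\<bar> * \<bar>pmono P \<alpha> t\<bar> \<le> \<bar>a \<alpha>\<bar> * (\<epsilon> * \<tau> ^ pdeg P \<alpha>)"
      by (intro mult_left_mono) auto
    then show ?thesis by (simp add: abs_mult mult_ac)
  qed
  show sm: "(\<lambda>\<alpha>. \<bar>a \<alpha> * pmono P \<alpha> t\<bar>) summable_on multi_indices P"
    by (rule summable_on_comparison_test[OF S' bound]) auto
  have "infsum (\<lambda>\<alpha>. \<bar>a \<alpha> * pmono P \<alpha> t\<bar>) (multi_indices P)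
          \<le> infsum (\<lambda>\<alpha>. \<epsilon> * (\<bar>a \<alpha>\<bar> * \<tau> ^ pdeg P \<alpha>)) (multi_indices P)"
    by (rule infsum_mono[OF sm S' bound])
  also have "\<dots> = \<epsilon> * infsum (\<lambda>\<alpha>. \<bar>a \<alpha>\<bar> * \<tau> ^ pdeg P \<alpha>) (multi_indices P)"
    by (rule infsum_cmult_right) (use S in auto)
  finally show "infsum (\<lambda>\<alpha>. \<bar>a \<alpha> * pmono P \<alpha> t\<bar>) (multi_indices P)
           \<le> \<epsilon> * infsum (\<lambda>\<alpha>. \<bar>a \<alpha>\<bar> * \<tau> ^ pdeg P \<alpha>) (multi_indices P)" .
qed

lemma ps_value_bound:
  assumes "((\<lambda>\<alpha>. a \<alpha> * pmono P \<alpha> t) has_sum v) A"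
    and "(\<lambda>\<alpha>. \<bar>a \<alpha> * pmono P \<alpha> t\<bar>) summable_on A"
  shows "\<bar>v\<bar> \<le> infsum (\<lambda>\<alpha>. \<bar>a \<alpha> * pmono P \<alpha> t\<bar>) A"
proof -
  have "v = infsum (\<lambda>\<alpha>. a \<alpha> * pmono P \<alpha> t) A" using assms(1) by (simp add: infsumI)
  moreover have "norm (infsum (\<lambda>\<alpha>. a \<alpha> * pmono P \<alpha> t) A) \<le> infsum (\<lambda>\<alpha>. norm (a \<alpha> * pmono P \<alpha> t)) A"
    by (rule norm_infsum_bound) (use assms(2) in simp)
  ultimately show ?thesis by simp
qed

lemma prod_Sigma_fst:
  assumes "finite Q"
  shows "(\<Prod>\<kappa>\<in>Sigma Q (\<lambda>q. {..<\<beta> q}). g (fst \<kappa>)) = (\<Prod>q\<in>Q. (g q :: real) ^ \<beta> q)"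
  using prod.Sigma[of Q "\<lambda>q. {..<\<beta> q}" "\<lambda>q k. g q"] assms by (simp add: case_prod_unfold)

lemma ps_comp:
  fixes a :: "'q \<Rightarrow> ('p \<Rightarrow> nat) \<Rightarrow> real" and u :: "'q \<Rightarrow> ('p \<Rightarrow> real) \<Rightarrow> real"
    and d :: "('q \<Rightarrow> nat) \<Rightarrow> real" and H :: "('q \<Rightarrow> real) \<Rightarrow> real"
  assumes fP: "finite P" and fQ: "finite Q" and r: "r > 0" and \<rho>: "\<rho> > 0"
    and hu: "\<And>q t. q \<in> Q \<Longrightarrow> (\<forall>p\<in>P. \<bar>t p\<bar> < r) \<Longrightarrow>
               ((\<lambda>\<alpha>. a q \<alpha> * pmono P \<alpha> t) has_sum u q t) (multi_indices P)"
    and a0: "\<And>q. q \<in> Q \<Longrightarrow> a q (\<lambda>_. 0) = 0"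
    and hH: "\<And>s. (\<forall>q\<in>Q. \<bar>s q\<bar> < \<rho>) \<Longrightarrow> ((\<lambda>\<beta>. d \<beta> * pmono Q \<beta> s) has_sum H s) (multi_indices Q)"
  shows "\<exists>r'>0. \<exists>e. \<forall>t. (\<forall>p\<in>P. \<bar>t p\<bar> < r') \<longrightarrow>
            ((\<lambda>\<gamma>. e \<gamma> * pmono P \<gamma> t) has_sum H (\<lambda>q. u q t)) (multi_indices P)"
proof -
  define \<tau> where "\<tau> = r / 2"
  have \<tau>: "0 < \<tau>" "\<tau> < r" using r by (auto simp: \<tau>_def)
  define A where "A q = infsum (\<lambda>\<alpha>. \<bar>a q \<alpha>\<bar> * \<tau> ^ pdeg P \<alpha>) (multi_indices P)" for q
  define \<sigma>0 where "\<sigma>0 = \<rho> / 2"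
  have \<sigma>0: "0 < \<sigma>0" "\<sigma>0 < \<rho>" using \<rho> by (auto simp: \<sigma>0_def)
  define \<epsilon> where "\<epsilon> = min 1 (\<sigma>0 / (1 + (\<Sum>q\<in>Q. A q)))"
  have A0: "A q \<ge> 0" for q unfolding A_def using \<tau> by (intro infsum_nonneg) auto
  have SA: "0 \<le> (\<Sum>q\<in>Q. A q)" using A0 by (intro sum_nonneg) auto
  have \<epsilon>: "0 < \<epsilon>" "\<epsilon> \<le> 1" using \<sigma>0 SA by (auto simp: \<epsilon>_def)
  have \<epsilon>A: "\<epsilon> * A q \<le> \<sigma>0" if "q \<in> Q" for q
  proof -
    have "A q \<le> (\<Sum>q\<in>Q. A q)" using that fQ A0 by (intro member_le_sum) auto
    then have "A q \<le> 1 + (\<Sum>q\<in>Q. A q)" by simp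
    have "\<epsilon> * A q \<le> \<sigma>0 / (1 + (\<Sum>q\<in>Q. A q)) * A q"
      using A0 by (intro mult_right_mono) (auto simp: \<epsilon>_def)
    also have "\<dots> = \<sigma>0 * (A q / (1 + (\<Sum>q\<in>Q. A q)))" by simp
    also have "\<dots> \<le> \<sigma>0 * 1"
      using \<open>A q \<le> 1 + _\<close> SA \<sigma>0 by (intro mult_left_mono) (auto simp: divide_le_eq_1)
    finally show ?thesis by simp
  qed
  define r' where "r' = \<epsilon> * \<tau>"
  have r': "0 < r'" "r' \<le> \<tau>" using \<epsilon> \<tau> by (auto simp: r'_def mult_le_cancel_right1)
  define K where "K \<beta> = Sigma Q (\<lambda>q. {..<\<beta> q})" for \<beta> :: "'q \<Rightarrow> nat"
  have finK: "finite (K \<beta>)" for \<beta> unfolding K_def using fQ by auto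
  define \<Omega> where "\<Omega> = Sigma (multi_indices Q) (\<lambda>\<beta>. PiE (K \<beta>) (\<lambda>_. multi_indices P))"
  define X where "X t = (\<lambda>(\<beta>, \<sigma>). d \<beta> * (\<Prod>\<kappa>\<in>K \<beta>. a (fst \<kappa>) (\<sigma> \<kappa>) * pmono P (\<sigma> \<kappa>) t))" for t
  define M where "M t q = infsum (\<lambda>\<alpha>. \<bar>a q \<alpha> * pmono P \<alpha> t\<bar>) (multi_indices P)" for t q
  have dsum: "(\<lambda>\<beta>. \<bar>d \<beta>\<bar> * \<sigma>0 ^ pdeg Q \<beta>) summable_on multi_indices Q"
    by (rule ps_abs_summable[OF hH]) (use \<sigma>0 in auto)

  have key: "(\<lambda>\<omega>. norm (X t \<omega>)) summable_on \<Omega> \<and> (X t has_sum H (\<lambda>q. u q t)) \<Omega>"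
    if t: "\<forall>p\<in>P. \<bar>t p\<bar> < r'" for t
  proof -
    have tle: "\<forall>p\<in>P. \<bar>t p\<bar> \<le> \<epsilon> * \<tau>" using t by (auto simp: r'_def less_imp_le)
    have tr: "\<forall>p\<in>P. \<bar>t p\<bar> < r" using t r' \<tau> by force
    have Msum: "(\<lambda>\<alpha>. \<bar>a q \<alpha> * pmono P \<alpha> t\<bar>) summable_on multi_indices P"
      and Mle0: "M t q \<le> \<epsilon> * A q" if "q \<in> Q" for q
      using ps_major[OF fP hu[OF that], where \<tau>=\<tau> and \<epsilon>=\<epsilon> and t=t] a0[OF that] \<tau> \<epsilon> tle
      by (auto simp: M_def A_def)
    have Mle: "M t q \<le> \<sigma>0" if "q \<in> Q" for q using Mle0[OF that] \<epsilon>A[OF that] by linarith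
    have Mnn: "M t q \<ge> 0" for q unfolding M_def by (intro infsum_nonneg) auto
    have uM: "\<bar>u q t\<bar> \<le> M t q" if "q \<in> Q" for q
      unfolding M_def by (rule ps_value_bound[OF hu[OF that tr] Msum[OF that]])
    have us: "\<forall>q\<in>Q. \<bar>u q t\<bar> < \<rho>" using uM Mle \<sigma>0 by force
    have Hs: "((\<lambda>\<beta>. d \<beta> * pmono Q \<beta> (\<lambda>q. u q t)) has_sum H (\<lambda>q. u q t)) (multi_indices Q)"
      by (rule hH) (use us in auto)
    have uinf: "infsum (\<lambda>\<alpha>. a q \<alpha> * pmono P \<alpha> t) (multi_indices P) = u q t" if "q \<in> Q" for q
      by (rule infsumI[OF hu[OF that tr]])
    have inner: "((\<lambda>\<sigma>. X t (\<beta>, \<sigma>)) has_sum d \<beta> * pmono Q \<beta> (\<lambda>q. u q t)) (PiE (K \<beta>) (\<lambda>_. multi_indices P))"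
      and inner_abs: "((\<lambda>\<sigma>. norm (X t (\<beta>, \<sigma>))) has_sum \<bar>d \<beta>\<bar> * (\<Prod>q\<in>Q. M t q ^ \<beta> q))
                 (PiE (K \<beta>) (\<lambda>_. multi_indices P))" for \<beta>
    proof -
      have fs: "(\<lambda>y. norm (a (fst \<kappa>) y * pmono P y t)) summable_on multi_indices P" if "\<kappa> \<in> K \<beta>" for \<kappa>
        using Msum[of "fst \<kappa>"] that by (auto simp: K_def)
      note h = prod_PiE_has_sum_abs[where A="K \<beta>" and f="\<lambda>\<kappa> y. a (fst \<kappa>) y * pmono P y t"
         and B="\<lambda>_. multi_indices P", OF finK fs]
      have e1: "(\<Prod>\<kappa>\<in>K \<beta>. infsum (\<lambda>y. a (fst \<kappa>) y * pmono P y t) (multi_indices P)) = pmono Q \<beta> (\<lambda>q. u q t)"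
      proof -
        have "(\<Prod>\<kappa>\<in>K \<beta>. infsum (\<lambda>y. a (fst \<kappa>) y * pmono P y t) (multi_indices P)) = (\<Prod>\<kappa>\<in>K \<beta>. u (fst \<kappa>) t)"
          by (intro prod.cong refl uinf) (auto simp: K_def)
        also have "\<dots> = pmono Q \<beta> (\<lambda>q. u q t)"
          unfolding K_def pmono_def by (rule prod_Sigma_fst[OF fQ])
        finally show ?thesis .
      qed
      have e2: "(\<Prod>\<kappa>\<in>K \<beta>. infsum (\<lambda>y. \<bar>a (fst \<kappa>) y * pmono P y t\<bar>) (multi_indices P)) = (\<Prod>q\<in>Q. M t q ^ \<beta> q)"
        unfolding K_def M_def by (rule prod_Sigma_fst[OF fQ])
      show "((\<lambda>\<sigma>. X t (\<beta>, \<sigma>)) has_sum d \<beta> * pmono Q \<beta> (\<lambda>q. u q t)) (PiE (K \<beta>) (\<lambda>_. multi_indices P))"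
        using has_sum_cmult_right[OF h(1), of "d \<beta>"] unfolding e1 by (simp add: X_def)
      show "((\<lambda>\<sigma>. norm (X t (\<beta>, \<sigma>))) has_sum \<bar>d \<beta>\<bar> * (\<Prod>q\<in>Q. M t q ^ \<beta> q)) (PiE (K \<beta>) (\<lambda>_. multi_indices P))"
        using has_sum_cmult_right[OF h(2), of "\<bar>d \<beta>\<bar>"] unfolding e2 by (simp add: X_def abs_mult abs_prod)
    qed
    have outer_abs: "(\<lambda>\<beta>. \<bar>d \<beta>\<bar> * (\<Prod>q\<in>Q. M t q ^ \<beta> q)) summable_on multi_indices Q"
    proof (rule summable_on_comparison_test[OF dsum])
      fix \<beta> :: "'q \<Rightarrow> nat"
      have "(\<Prod>q\<in>Q. M t q ^ \<beta> q) \<le> (\<Prod>q\<in>Q. \<sigma>0 ^ \<beta> q)"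
        using Mnn Mle by (intro prod_mono conjI power_mono zero_le_power) auto
      also have "\<dots> = \<sigma>0 ^ pdeg Q \<beta>" by (simp add: pdeg_def power_sum)
      finally show "\<bar>d \<beta>\<bar> * (\<Prod>q\<in>Q. M t q ^ \<beta> q) \<le> \<bar>d \<beta>\<bar> * \<sigma>0 ^ pdeg Q \<beta>"
        by (intro mult_left_mono) auto
      show "0 \<le> \<bar>d \<beta>\<bar> * (\<Prod>q\<in>Q. M t q ^ \<beta> q)" using Mnn by (intro mult_nonneg_nonneg prod_nonneg) auto
    qed
    have Xabs: "(\<lambda>\<omega>. norm (X t \<omega>)) summable_on \<Omega>"
    proof -
      have "(\<lambda>\<omega>. norm (X t \<omega>)) summable_on \<Omega>"
        unfolding \<Omega>_def
      proof (rule Infinite_Sum.abs_summable_on_Sigma_iff[THEN iffD2], intro conjI ballI)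
        fix \<beta> assume "\<beta> \<in> multi_indices Q"
        show "(\<lambda>y. norm (X t (\<beta>, y))) summable_on PiE (K \<beta>) (\<lambda>_. multi_indices P)"
          using has_sum_imp_summable[OF inner_abs] by simp
      next
        have "infsum (\<lambda>y. norm (X t (\<beta>, y))) (PiE (K \<beta>) (\<lambda>_. multi_indices P))
              = \<bar>d \<beta>\<bar> * (\<Prod>q\<in>Q. M t q ^ \<beta> q)" for \<beta>
          by (intro infsumI inner_abs)
        moreover have "(\<lambda>\<beta>. norm (\<bar>d \<beta>\<bar> * (\<Prod>q\<in>Q. M t q ^ \<beta> q))) summable_on multi_indices Q"
        proof -
          have "norm (\<bar>d \<beta>\<bar> * (\<Prod>q\<in>Q. M t q ^ \<beta> q)) = \<bar>d \<beta>\<bar> * (\<Prod>q\<in>Q. M t q ^ \<beta> q)" for \<beta>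
            using Mnn by (simp add: abs_mult abs_prod)
          then show ?thesis using outer_abs by simp
        qed
        ultimately show "(\<lambda>\<beta>. norm (infsum (\<lambda>y. norm (X t (\<beta>, y))) (PiE (K \<beta>) (\<lambda>_. multi_indices P))))
              summable_on multi_indices Q" by simp
      qed
      then show ?thesis by simp
    qed
    have "(X t has_sum H (\<lambda>q. u q t)) \<Omega>"
      unfolding \<Omega>_def
      by (rule has_sum_SigmaI[OF _ Hs]) (use inner abs_summable_summable[OF Xabs] in \<open>auto simp: \<Omega>_def\<close>)
    then show ?thesis using Xabs by simp
  qed
  define \<Gamma> where "\<Gamma> \<omega> = (\<lambda>p. \<Sum>\<kappa>\<in>K (fst \<omega>). snd \<omega> \<kappa> p)" for \<omega> :: "('q \<Rightarrow> nat) \<times> ('q \<times> nat \<Rightarrow> 'p \<Rightarrow> nat)"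
  define Y where "Y \<omega> = d (fst \<omega>) * (\<Prod>\<kappa>\<in>K (fst \<omega>). a (fst \<kappa>) (snd \<omega> \<kappa>))" for \<omega> :: "('q \<Rightarrow> nat) \<times> ('q \<times> nat \<Rightarrow> 'p \<Rightarrow> nat)"
  have XY: "X t \<omega> = Y \<omega> * pmono P (\<Gamma> \<omega>) t" for t \<omega>
  proof -
    obtain \<beta> \<sigma> where \<omega>: "\<omega> = (\<beta>, \<sigma>)" by (cases \<omega>)
    have "X t \<omega> = d \<beta> * ((\<Prod>\<kappa>\<in>K \<beta>. a (fst \<kappa>) (\<sigma> \<kappa>)) * (\<Prod>\<kappa>\<in>K \<beta>. pmono P (\<sigma> \<kappa>) t))"
      by (simp add: X_def \<omega> prod.distrib)
    also have "(\<Prod>\<kappa>\<in>K \<beta>. pmono P (\<sigma> \<kappa>) t) = pmono P (\<Gamma> \<omega>) t"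
      unfolding \<Gamma>_def \<omega> by (simp add: pmono_sum_idx[OF finK])
    finally show ?thesis by (simp add: Y_def \<omega>)
  qed
  have \<Gamma>MI: "\<Gamma> \<omega> \<in> multi_indices P" if "\<omega> \<in> \<Omega>" for \<omega>
    using that unfolding \<Omega>_def \<Gamma>_def multi_indices_def by (auto simp: PiE_def Pi_def intro!: sum.neutral)
  define fib where "fib \<gamma> = {\<omega> \<in> \<Omega>. \<Gamma> \<omega> = \<gamma>}" for \<gamma>
  define e where "e \<gamma> = infsum Y (fib \<gamma>)" for \<gamma>
  define t1 where "t1 = (\<lambda>_::'p. r' / 2)"
  have t1: "\<forall>p\<in>P. \<bar>t1 p\<bar> < r'" using r' by (auto simp: t1_def)
  have Ysum: "Y summable_on fib \<gamma>" for \<gamma>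
  proof -
    have "X t1 summable_on \<Omega>"
      using key[OF t1] abs_summable_summable by blast
    then have S: "X t1 summable_on fib \<gamma>"
      by (rule summable_on_subset_banach) (auto simp: fib_def)
    define c where "c = (r' / 2) ^ pdeg P \<gamma>"
    have c: "c \<noteq> 0" using r' by (simp add: c_def)
    have "(\<lambda>\<omega>. X t1 \<omega> * (1 / c)) summable_on fib \<gamma>"
      by (rule summable_on_cmult_left[OF S])
    moreover have "X t1 \<omega> * (1 / c) = Y \<omega>" if "\<omega> \<in> fib \<gamma>" for \<omega>
      using that c by (simp add: XY fib_def t1_def pmono_const c_def)
    ultimately show ?thesis by (rule summable_on_cong[THEN iffD1, rotated]) auto
  qed
  show ?thesis
  proof (intro exI[of _ r'] conjI exI[of _ e] allI impI)
    show "0 < r'" by (rule r'(1))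
    fix t assume t: "\<forall>p\<in>P. \<bar>t p\<bar> < r'"
    have h1: "(X t has_sum H (\<lambda>q. u q t)) \<Omega>" using key[OF t] by blast
    have h2: "((\<lambda>(\<gamma>, \<omega>). X t \<omega>) has_sum H (\<lambda>q. u q t)) (Sigma (multi_indices P) fib)"
    proof -
      have "(X t has_sum H (\<lambda>q. u q t)) \<Omega> = ((\<lambda>(\<gamma>, \<omega>). X t \<omega>) has_sum H (\<lambda>q. u q t)) (Sigma (multi_indices P) fib)"
        by (rule has_sum_reindex_bij_witness[where i=snd and j="\<lambda>\<omega>. (\<Gamma> \<omega>, \<omega>)"])
           (auto simp: fib_def \<Gamma>MI)
      then show ?thesis using h1 by simp
    qed
    have inner: "((\<lambda>\<omega>. X t \<omega>) has_sum e \<gamma> * pmono P \<gamma> t) (fib \<gamma>)" if "\<gamma> \<in> multi_indices P" for \<gamma>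
    proof -
      have "((\<lambda>\<omega>. Y \<omega> * pmono P \<gamma> t) has_sum e \<gamma> * pmono P \<gamma> t) (fib \<gamma>)"
        unfolding e_def by (rule has_sum_cmult_left) (use Ysum in simp)
      moreover have "Y \<omega> * pmono P \<gamma> t = X t \<omega>" if "\<omega> \<in> fib \<gamma>" for \<omega>
        using that by (simp add: XY fib_def)
      ultimately show ?thesis by (rule has_sum_cong[THEN iffD1, rotated]) auto
    qed
    show "((\<lambda>\<gamma>. e \<gamma> * pmono P \<gamma> t) has_sum H (\<lambda>q. u q t)) (multi_indices P)"
      by (rule has_sum_SigmaD[OF h2]) (use inner in simp)
  qed
qed

lemma has_sum_sum_fin:
  fixes f :: "'k \<Rightarrow> 'a \<Rightarrow> 'b::{topological_comm_monoid_add}"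
  assumes "finite S" "\<And>k. k \<in> S \<Longrightarrow> (f k has_sum v k) A"
  shows "((\<lambda>x. \<Sum>k\<in>S. f k x) has_sum (\<Sum>k\<in>S. v k)) A"
  using assms by (induction S rule: finite_induct) (auto intro: has_sum_add)

lemma has_sum_diff':
  fixes f :: "'a \<Rightarrow> 'b::{topological_ab_group_add}"
  assumes "(f has_sum a) A" "(g has_sum b) A"
  shows "((\<lambda>x. f x - g x) has_sum a - b) A"
  using has_sum_add[OF assms(1) has_sum_uminus[where f=g and a="-b", THEN iffD2]] assms(2) by simp

definition emb :: "'i set \<Rightarrow> ('i \<times> 'a \<Rightarrow> real) \<Rightarrow> 'i \<Rightarrow> 'a::euclidean_space" where
  "emb I t = (\<lambda>i. if i \<in> I then (\<Sum>b\<in>Basis. t (i, b) *\<^sub>R b) else 0)"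

definition coords :: "('i \<Rightarrow> 'a::euclidean_space) \<Rightarrow> 'i \<times> 'a \<Rightarrow> real" where
  "coords h = (\<lambda>p. h (fst p) \<bullet> snd p)"

lemma emb_in: "emb I t \<in> coord_space I"
  by (simp add: emb_def coord_space_def)

lemma coords_emb: "i \<in> I \<Longrightarrow> b \<in> Basis \<Longrightarrow> coords (emb I t) (i, b) = t (i, b)"
  by (simp add: coords_def emb_def inner_sum_left inner_Basis if_distrib cong: if_cong)

lemma emb_coords: "h \<in> coord_space I \<Longrightarrow> emb I (coords h) = h"
  by (auto simp: emb_def coords_def coord_space_def euclidean_representation fun_eq_iff)

lemma emb_zero: "emb I (\<lambda>_. 0) = (\<lambda>_. 0)"
  by (simp add: emb_def fun_eq_iff)

lemma monomial_eq: "monomial I \<alpha> h = pmono (I \<times> Basis) \<alpha> (coords h)"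
  by (simp add: monomial_def pmono_def coords_def)

lemma pmono_cong: "(\<And>p. p \<in> P \<Longrightarrow> t p = t' p) \<Longrightarrow> pmono P \<alpha> t = pmono P \<alpha> t'"
  by (simp add: pmono_def)

lemma monomial_emb: "monomial I \<alpha> (emb I t) = pmono (I \<times> Basis) \<alpha> t"
  unfolding monomial_eq by (rule pmono_cong) (auto simp: coords_emb)

lemma norm_emb_less:
  assumes "\<forall>p\<in>I \<times> Basis. \<bar>t p\<bar> < c" "i \<in> I"
  shows "norm (emb I t i :: 'a::euclidean_space) < real DIM('a) * c"
proof -
  have "norm (emb I t i :: 'a) \<le> (\<Sum>b\<in>(Basis::'a set). norm (t (i, b) *\<^sub>R b))"
    using assms(2) unfolding emb_def by (simp only: if_True) (rule norm_sum)
  also have "\<dots> = (\<Sum>b\<in>(Basis::'a set). \<bar>t (i, b)\<bar>)" by simp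
  also have "\<dots> < (\<Sum>b\<in>(Basis::'a set). c)"
    using assms by (intro sum_strict_mono) auto
  also have "\<dots> = real DIM('a) * c" by simp
  finally show ?thesis .
qed

lemma coords_le: "b \<in> Basis \<Longrightarrow> \<bar>coords h (i, b)\<bar> \<le> norm (h i)"
  by (simp add: coords_def Basis_le_norm)

definition ana :: "'i set \<Rightarrow> (('i \<Rightarrow> 'a::euclidean_space) \<Rightarrow> real) \<Rightarrow> ('i \<Rightarrow> 'a) \<Rightarrow> bool" where
  "ana I \<phi> x \<longleftrightarrow> (\<exists>r>0. \<exists>a. \<forall>t. (\<forall>p\<in>I \<times> Basis. \<bar>t p\<bar> < r) \<longrightarrow>
      ((\<lambda>\<alpha>. a \<alpha> * pmono (I \<times> Basis) \<alpha> t) has_sum \<phi> (\<lambda>i. x i + emb I t i)) (multi_indices (I \<times> Basis)))"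

lemma min_radius:
  assumes "finite S" "\<And>s. s \<in> S \<Longrightarrow> R s > (0::real)"
  shows "\<exists>r>0. \<forall>s\<in>S. r \<le> R s"
proof -
  define r where "r = Min (insert 1 (R ` S))"
  have "r > 0" unfolding r_def using assms by (subst Min_gr_iff) auto
  moreover have "\<forall>s\<in>S. r \<le> R s" unfolding r_def using assms by auto
  ultimately show ?thesis by blast
qed

lemma RA_imp_ana:
  fixes F :: "('i \<Rightarrow> 'a::euclidean_space) \<Rightarrow> ('j \<Rightarrow> 'a)"
  assumes "real_analytic_at I J F x" "j \<in> J" "b \<in> Basis"
  shows "ana I (\<lambda>z. F z j \<bullet> b) x"
proof -
  obtain r c where r: "r > 0" and hc: "\<forall>h\<in>coord_space I. (\<forall>i\<in>I. norm (h i) < r) \<longrightarrow>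
          (\<forall>j\<in>J. ((\<lambda>\<alpha>. monomial I \<alpha> h *\<^sub>R c \<alpha> j) has_sum F (\<lambda>i. x i + h i) j)
                     (multi_indices (I \<times> Basis)))"
    using assms(1) unfolding real_analytic_at_def by blast
  define r' where "r' = r / real DIM('a)"
  have r': "r' > 0" using r by (simp add: r'_def)
  show ?thesis unfolding ana_def
  proof (intro exI[of _ r'] conjI exI[of _ "\<lambda>\<alpha>. c \<alpha> j \<bullet> b"] allI impI r')
    fix t :: "'i \<times> 'a \<Rightarrow> real" assume t: "\<forall>p\<in>I \<times> Basis. \<bar>t p\<bar> < r'"
    have "\<forall>i\<in>I. norm (emb I t i :: 'a) < r"
      using norm_emb_less[OF t] by (simp add: r'_def)
    then have "((\<lambda>\<alpha>. monomial I \<alpha> (emb I t) *\<^sub>R c \<alpha> j) has_sum F (\<lambda>i. x i + emb I t i) j)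
                     (multi_indices (I \<times> Basis))"
      using hc emb_in assms(2) by blast
    from has_sum_bounded_linear[OF bounded_linear_inner_left this, of b]
    show "((\<lambda>\<alpha>. (c \<alpha> j \<bullet> b) * pmono (I \<times> Basis) \<alpha> t) has_sum F (\<lambda>i. x i + emb I t i) j \<bullet> b)
           (multi_indices (I \<times> Basis))"
      by (simp add: monomial_emb mult.commute)
  qed
qed

lemma ana_imp_RA:
  fixes F :: "('i \<Rightarrow> 'a::euclidean_space) \<Rightarrow> ('j \<Rightarrow> 'a)"
  assumes fJ: "finite J" and h: "\<And>j b. j \<in> J \<Longrightarrow> b \<in> Basis \<Longrightarrow> ana I (\<lambda>z. F z j \<bullet> b) x"
  shows "real_analytic_at I J F x"
proof -
  have "\<forall>q\<in>J \<times> (Basis::'a set). \<exists>ra. fst ra > 0 \<and> (\<forall>t. (\<forall>p\<in>I \<times> (Basis::'a set). \<bar>t p\<bar> < fst ra) \<longrightarrow>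
      ((\<lambda>\<alpha>. snd ra \<alpha> * pmono (I \<times> (Basis::'a set)) \<alpha> t) has_sum F (\<lambda>i. x i + emb I t i) (fst q) \<bullet> snd q) (multi_indices (I \<times> (Basis::'a set))))"
  proof
    fix q assume "q \<in> J \<times> (Basis::'a set)"
    then have "ana I (\<lambda>z. F z (fst q) \<bullet> snd q) x" using h by auto
    then obtain r a where "r > 0" "\<forall>t. (\<forall>p\<in>I \<times> (Basis::'a set). \<bar>t p\<bar> < r) \<longrightarrow>
      ((\<lambda>\<alpha>. a \<alpha> * pmono (I \<times> (Basis::'a set)) \<alpha> t) has_sum F (\<lambda>i. x i + emb I t i) (fst q) \<bullet> snd q) (multi_indices (I \<times> (Basis::'a set)))"
      unfolding ana_def by blast
    then show "\<exists>ra. fst ra > 0 \<and> (\<forall>t. (\<forall>p\<in>I \<times> (Basis::'a set). \<bar>t p\<bar> < fst ra) \<longrightarrow>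
      ((\<lambda>\<alpha>. snd ra \<alpha> * pmono (I \<times> (Basis::'a set)) \<alpha> t) has_sum F (\<lambda>i. x i + emb I t i) (fst q) \<bullet> snd q) (multi_indices (I \<times> (Basis::'a set))))"
      by (intro exI[of _ "(r, a)"]) auto
  qed
  from bchoice[OF this] obtain RA where RAh: "\<forall>q\<in>J \<times> (Basis::'a set). fst (RA q) > 0 \<and> (\<forall>t. (\<forall>p\<in>I \<times> (Basis::'a set). \<bar>t p\<bar> < fst (RA q)) \<longrightarrow>
      ((\<lambda>\<alpha>. snd (RA q) \<alpha> * pmono (I \<times> (Basis::'a set)) \<alpha> t) has_sum F (\<lambda>i. x i + emb I t i) (fst q) \<bullet> snd q) (multi_indices (I \<times> (Basis::'a set))))"
    by blast
  define R where "R q = fst (RA q)" for q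
  define A where "A q = snd (RA q)" for q
  have RA: "\<And>q. q \<in> J \<times> (Basis::'a set) \<Longrightarrow> R q > 0"
    "\<And>q t. q \<in> J \<times> (Basis::'a set) \<Longrightarrow> (\<forall>p\<in>I \<times> (Basis::'a set). \<bar>t p\<bar> < R q) \<Longrightarrow>
      ((\<lambda>\<alpha>. A q \<alpha> * pmono (I \<times> (Basis::'a set)) \<alpha> t) has_sum F (\<lambda>i. x i + emb I t i) (fst q) \<bullet> snd q) (multi_indices (I \<times> (Basis::'a set)))"
    using RAh unfolding R_def A_def by auto
  obtain r where r: "r > 0" "\<And>q. q \<in> J \<times> (Basis::'a set) \<Longrightarrow> r \<le> R q"
    using min_radius[of "J \<times> (Basis::'a set)" R] fJ RA(1) by auto
  show ?thesis unfolding real_analytic_at_def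
  proof (intro exI[of _ r] conjI exI[of _ "\<lambda>\<alpha> j. \<Sum>b\<in>Basis. A (j, b) \<alpha> *\<^sub>R b"] ballI impI r)
    fix hh :: "'i \<Rightarrow> 'a" and j assume hh: "hh \<in> coord_space I" "\<forall>i\<in>I. norm (hh i) < r" and j: "j \<in> J"
    have eh: "emb I (coords hh) = hh" by (rule emb_coords[OF hh(1)])
    have "((\<lambda>\<alpha>. A (j, b) \<alpha> * pmono (I \<times> (Basis::'a set)) \<alpha> (coords hh)) has_sum F (\<lambda>i. x i + hh i) j \<bullet> b)
            (multi_indices (I \<times> (Basis::'a set)))" if b: "b \<in> Basis" for b
    proof -
      have "\<forall>p\<in>I \<times> (Basis::'a set). \<bar>coords hh p\<bar> < R (j, b)"
      proof
        fix p assume p: "p \<in> I \<times> (Basis::'a set)"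
        then have "\<bar>coords hh p\<bar> \<le> norm (hh (fst p))" using coords_le[of "snd p" hh "fst p"] by auto
        also have "\<dots> < r" using hh p by auto
        also have "\<dots> \<le> R (j, b)" using r j b by auto
        finally show "\<bar>coords hh p\<bar> < R (j, b)" .
      qed
      from RA(2)[OF _ this] j b show ?thesis by (simp add: eh)
    qed
    then have "((\<lambda>\<alpha>. (A (j, b) \<alpha> * pmono (I \<times> (Basis::'a set)) \<alpha> (coords hh)) *\<^sub>R b) has_sum
                 (F (\<lambda>i. x i + hh i) j \<bullet> b) *\<^sub>R b) (multi_indices (I \<times> (Basis::'a set)))" if "b \<in> Basis" for b
      using has_sum_bounded_linear[OF bounded_linear_scaleR_left] that by blast
    then have "((\<lambda>\<alpha>. \<Sum>b\<in>Basis. (A (j, b) \<alpha> * pmono (I \<times> (Basis::'a set)) \<alpha> (coords hh)) *\<^sub>R b) has_sum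
                 (\<Sum>b\<in>Basis. (F (\<lambda>i. x i + hh i) j \<bullet> b) *\<^sub>R b)) (multi_indices (I \<times> (Basis::'a set)))"
      by (intro has_sum_sum_fin) auto
    then show "((\<lambda>\<alpha>. monomial I \<alpha> hh *\<^sub>R (\<Sum>b\<in>Basis. A (j, b) \<alpha> *\<^sub>R b)) has_sum F (\<lambda>i. x i + hh i) j)
                     (multi_indices (I \<times> (Basis::'a set)))"
      by (simp add: euclidean_representation monomial_eq scaleR_sum_right mult.commute)
  qed
qed

lemma zero_mi: "(\<lambda>_. 0) \<in> multi_indices P"
  by (simp add: multi_indices_def)

lemma ps_shift:
  assumes fP: "finite P" and r: "r > 0"
    and hs: "\<And>t. (\<forall>p\<in>P. \<bar>t p\<bar> < r) \<Longrightarrow> ((\<lambda>\<alpha>. a \<alpha> * pmono P \<alpha> t) has_sum V t) (multi_indices P)"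
  shows "a (\<lambda>_. 0) = V (\<lambda>_. 0) \<and> (\<forall>t. (\<forall>p\<in>P. \<bar>t p\<bar> < r) \<longrightarrow>
          ((\<lambda>\<alpha>. (if \<alpha> = (\<lambda>_. 0) then 0 else a \<alpha>) * pmono P \<alpha> t) has_sum V t - a (\<lambda>_. 0)) (multi_indices P))"
proof (intro conjI allI impI)
  have single: "((\<lambda>\<alpha>. if \<alpha> = (\<lambda>_. 0) then a \<alpha> * pmono P \<alpha> t else 0) has_sum a (\<lambda>_. 0)) (multi_indices P)" for t
    by (rule has_sum_finite_neutralI[where B="{\<lambda>_. 0}"]) (auto simp: zero_mi)
  have "((\<lambda>\<alpha>. a \<alpha> * pmono P \<alpha> (\<lambda>_. 0)) has_sum V (\<lambda>_. 0)) (multi_indices P)"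
    by (rule hs) (use r in auto)
  moreover have "a \<alpha> * pmono P \<alpha> (\<lambda>_. 0) = (if \<alpha> = (\<lambda>_. 0) then a \<alpha> * pmono P \<alpha> (\<lambda>_. 0) else 0)"
    if "\<alpha> \<in> multi_indices P" for \<alpha>
    using pmono_at0[OF fP that] by auto
  ultimately have "((\<lambda>\<alpha>. if \<alpha> = (\<lambda>_. 0) then a \<alpha> * pmono P \<alpha> (\<lambda>_. 0) else 0) has_sum V (\<lambda>_. 0)) (multi_indices P)"
    by (simp cong: has_sum_cong)
  then show "a (\<lambda>_. 0) = V (\<lambda>_. 0)" using single has_sum_unique by blast
  fix t assume t: "\<forall>p\<in>P. \<bar>t p\<bar> < r"
  have "((\<lambda>\<alpha>. a \<alpha> * pmono P \<alpha> t - (if \<alpha> = (\<lambda>_. 0) then a \<alpha> * pmono P \<alpha> t else 0)) has_sum V t - a (\<lambda>_. 0))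
          (multi_indices P)"
    by (rule has_sum_diff'[OF hs[OF t] single])
  moreover have "a \<alpha> * pmono P \<alpha> t - (if \<alpha> = (\<lambda>_. 0) then a \<alpha> * pmono P \<alpha> t else 0) =
        (if \<alpha> = (\<lambda>_. 0) then 0 else a \<alpha>) * pmono P \<alpha> t" for \<alpha>
    by auto
  ultimately show "((\<lambda>\<alpha>. (if \<alpha> = (\<lambda>_. 0) then 0 else a \<alpha>) * pmono P \<alpha> t) has_sum V t - a (\<lambda>_. 0)) (multi_indices P)"
    by simp
qed

lemma x_plus_emb0: "(\<lambda>i. x i + emb I (\<lambda>_. 0) i) = x"
  by (simp add: emb_zero)

lemma ana_cont:
  fixes x :: "'i \<Rightarrow> 'a::euclidean_space"
  assumes fI: "finite I" and an: "ana I \<phi> x" and \<delta>: "\<delta> > 0"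
  shows "\<exists>r>0. \<forall>h\<in>coord_space I. (\<forall>i\<in>I. norm (h i) < r) \<longrightarrow> \<bar>\<phi> (\<lambda>i. x i + h i) - \<phi> x\<bar> < \<delta>"
proof -
  let ?P = "I \<times> (Basis::'a set)"
  have fP: "finite ?P" using fI by auto
  obtain r0 a where r0: "r0 > 0" and hs: "\<And>t. (\<forall>p\<in>?P. \<bar>t p\<bar> < r0) \<Longrightarrow>
      ((\<lambda>\<alpha>. a \<alpha> * pmono ?P \<alpha> t) has_sum \<phi> (\<lambda>i. x i + emb I t i)) (multi_indices ?P)"
    using an unfolding ana_def by blast
  note sh = ps_shift[OF fP r0 hs]
  have a0: "a (\<lambda>_. 0) = \<phi> x" using sh by (simp add: x_plus_emb0)
  define a' where "a' \<alpha> = (if \<alpha> = (\<lambda>_. 0) then 0 else a \<alpha>)" for \<alpha>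
  have hs': "\<And>t. (\<forall>p\<in>?P. \<bar>t p\<bar> < r0) \<Longrightarrow>
      ((\<lambda>\<alpha>. a' \<alpha> * pmono ?P \<alpha> t) has_sum \<phi> (\<lambda>i. x i + emb I t i) - \<phi> x) (multi_indices ?P)"
    using sh a0 unfolding a'_def by (simp add: x_plus_emb0)
  define \<tau> where "\<tau> = r0 / 2"
  define A where "A = infsum (\<lambda>\<alpha>. \<bar>a' \<alpha>\<bar> * \<tau> ^ pdeg ?P \<alpha>) (multi_indices ?P)"
  have A0: "A \<ge> 0" unfolding A_def \<tau>_def using r0 by (intro infsum_nonneg) auto
  define \<epsilon> where "\<epsilon> = min 1 (\<delta> / (A + 1))"
  have \<epsilon>: "0 < \<epsilon>" "\<epsilon> \<le> 1" using \<delta> A0 by (auto simp: \<epsilon>_def)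
  have \<epsilon>A: "\<epsilon> * A < \<delta>"
  proof -
    have "\<epsilon> * A \<le> \<delta> / (A + 1) * A" using A0 by (intro mult_right_mono) (auto simp: \<epsilon>_def)
    also have "\<dots> = \<delta> * (A / (A + 1))" by simp
    also have "\<dots> < \<delta> * 1" using A0 \<delta> by (intro mult_strict_left_mono) auto
    finally show ?thesis by simp
  qed
  show ?thesis
  proof (intro exI[of _ "\<epsilon> * \<tau>"] conjI ballI impI)
    show "0 < \<epsilon> * \<tau>" using \<epsilon> r0 by (simp add: \<tau>_def)
    fix h :: "'i \<Rightarrow> 'a" assume h: "h \<in> coord_space I" "\<forall>i\<in>I. norm (h i) < \<epsilon> * \<tau>"
    have tb: "\<forall>p\<in>?P. \<bar>coords h p\<bar> \<le> \<epsilon> * \<tau>"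
    proof
      fix p assume p: "p \<in> ?P"
      then have "\<bar>coords h p\<bar> \<le> norm (h (fst p))" using coords_le[of "snd p" h "fst p"] by auto
      then show "\<bar>coords h p\<bar> \<le> \<epsilon> * \<tau>" using h p by force
    qed
    have tr: "\<forall>p\<in>?P. \<bar>coords h p\<bar> < r0"
    proof
      fix p assume "p \<in> ?P"
      then have "\<bar>coords h p\<bar> \<le> \<epsilon> * \<tau>" using tb by auto
      also have "\<dots> \<le> 1 * \<tau>" using \<epsilon> r0 by (intro mult_right_mono) (auto simp: \<tau>_def)
      also have "\<dots> < r0" using r0 by (simp add: \<tau>_def)
      finally show "\<bar>coords h p\<bar> < r0" .
    qed
    have a'0: "a' (\<lambda>_. 0) = 0" by (simp add: a'_def)
    note mj = ps_major[OF fP hs' a'0, where \<tau>=\<tau> and \<epsilon>=\<epsilon> and t="coords h"]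
    have m1: "(\<lambda>\<alpha>. \<bar>a' \<alpha> * pmono ?P \<alpha> (coords h)\<bar>) summable_on multi_indices ?P"
      and m2: "infsum (\<lambda>\<alpha>. \<bar>a' \<alpha> * pmono ?P \<alpha> (coords h)\<bar>) (multi_indices ?P) \<le> \<epsilon> * A"
      using mj r0 \<epsilon> tb by (auto simp: \<tau>_def A_def)
    have "\<bar>\<phi> (\<lambda>i. x i + emb I (coords h) i) - \<phi> x\<bar> \<le> infsum (\<lambda>\<alpha>. \<bar>a' \<alpha> * pmono ?P \<alpha> (coords h)\<bar>) (multi_indices ?P)"
      by (rule ps_value_bound[OF hs'[OF tr] m1])
    then show "\<bar>\<phi> (\<lambda>i. x i + h i) - \<phi> x\<bar> < \<delta>"
      using m2 \<epsilon>A by (simp add: emb_coords[OF h(1)])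
  qed
qed

lemma ana_choice:
  fixes \<Phi> :: "('i \<Rightarrow> 'a::euclidean_space) \<Rightarrow> ('j \<Rightarrow> 'a)"
  assumes h: "\<And>j b. j \<in> J \<Longrightarrow> b \<in> Basis \<Longrightarrow> ana I (\<lambda>z. \<Phi> z j \<bullet> b) x"
  shows "\<exists>RA. \<forall>q\<in>J \<times> (Basis::'a set). fst (RA q) > 0 \<and> (\<forall>t. (\<forall>p\<in>I \<times> (Basis::'a set). \<bar>t p\<bar> < fst (RA q)) \<longrightarrow>
      ((\<lambda>\<alpha>. snd (RA q) \<alpha> * pmono (I \<times> (Basis::'a set)) \<alpha> t) has_sum \<Phi> (\<lambda>i. x i + emb I t i) (fst q) \<bullet> snd q) (multi_indices (I \<times> (Basis::'a set))))"
proof -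
  have "\<forall>q\<in>J \<times> (Basis::'a set). \<exists>ra. fst ra > 0 \<and> (\<forall>t. (\<forall>p\<in>I \<times> (Basis::'a set). \<bar>t p\<bar> < fst ra) \<longrightarrow>
      ((\<lambda>\<alpha>. snd ra \<alpha> * pmono (I \<times> (Basis::'a set)) \<alpha> t) has_sum \<Phi> (\<lambda>i. x i + emb I t i) (fst q) \<bullet> snd q) (multi_indices (I \<times> (Basis::'a set))))"
  proof
    fix q assume "q \<in> J \<times> (Basis::'a set)"
    then have "ana I (\<lambda>z. \<Phi> z (fst q) \<bullet> snd q) x" using h by auto
    then obtain r a where "r > 0" "\<forall>t. (\<forall>p\<in>I \<times> (Basis::'a set). \<bar>t p\<bar> < r) \<longrightarrow>
      ((\<lambda>\<alpha>. a \<alpha> * pmono (I \<times> (Basis::'a set)) \<alpha> t) has_sum \<Phi> (\<lambda>i. x i + emb I t i) (fst q) \<bullet> snd q) (multi_indices (I \<times> (Basis::'a set)))"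
      unfolding ana_def by blast
    then show "\<exists>ra. fst ra > 0 \<and> (\<forall>t. (\<forall>p\<in>I \<times> (Basis::'a set). \<bar>t p\<bar> < fst ra) \<longrightarrow>
      ((\<lambda>\<alpha>. snd ra \<alpha> * pmono (I \<times> (Basis::'a set)) \<alpha> t) has_sum \<Phi> (\<lambda>i. x i + emb I t i) (fst q) \<bullet> snd q) (multi_indices (I \<times> (Basis::'a set))))"
      by (intro exI[of _ "(r, a)"]) auto
  qed
  from bchoice[OF this] show ?thesis .
qed

lemma ana_comp:
  fixes \<Phi> :: "('i \<Rightarrow> 'a::euclidean_space) \<Rightarrow> ('j \<Rightarrow> 'a)" and G :: "('j \<Rightarrow> 'a) \<Rightarrow> ('k \<Rightarrow> 'a)"
  assumes fI: "finite I" and fJ: "finite J"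
    and h\<Phi>: "\<And>j b. j \<in> J \<Longrightarrow> b \<in> Basis \<Longrightarrow> ana I (\<lambda>z. \<Phi> z j \<bullet> b) x"
    and \<Phi>c: "\<And>z. \<Phi> z \<in> coord_space J"
    and hG: "real_analytic_at J K G (\<Phi> x)" and k: "k \<in> K" and b': "b' \<in> Basis"
  shows "ana I (\<lambda>z. G (\<Phi> z) k \<bullet> b') x"
proof -
  let ?P = "I \<times> (Basis::'a set)"
  let ?Q = "J \<times> (Basis::'a set)"
  have fP: "finite ?P" and fQ: "finite ?Q" using fI fJ by auto
  from ana_choice[OF h\<Phi>] obtain RA where RAh: "\<forall>q\<in>?Q. fst (RA q) > 0 \<and> (\<forall>t. (\<forall>p\<in>?P. \<bar>t p\<bar> < fst (RA q)) \<longrightarrow>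
      ((\<lambda>\<alpha>. snd (RA q) \<alpha> * pmono ?P \<alpha> t) has_sum \<Phi> (\<lambda>i. x i + emb I t i) (fst q) \<bullet> snd q) (multi_indices ?P))"
    ..
  define R where "R q = fst (RA q)" for q
  define A where "A q = snd (RA q)" for q
  have RA: "\<And>q. q \<in> ?Q \<Longrightarrow> R q > 0"
    "\<And>q t. q \<in> ?Q \<Longrightarrow> (\<forall>p\<in>?P. \<bar>t p\<bar> < R q) \<Longrightarrow>
      ((\<lambda>\<alpha>. A q \<alpha> * pmono ?P \<alpha> t) has_sum \<Phi> (\<lambda>i. x i + emb I t i) (fst q) \<bullet> snd q) (multi_indices ?P)"
    using RAh unfolding R_def A_def by auto
  obtain r where r: "r > 0" "\<And>q. q \<in> ?Q \<Longrightarrow> r \<le> R q"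
    using min_radius[of ?Q R] fQ RA(1) by auto
  define u where "u q t = \<Phi> (\<lambda>i. x i + emb I t i) (fst q) \<bullet> snd q - \<Phi> x (fst q) \<bullet> snd q"
    for q :: "'j \<times> 'a" and t :: "'i \<times> 'a \<Rightarrow> real"
  define a where "a q \<alpha> = (if \<alpha> = (\<lambda>_. 0) then 0 else A q \<alpha>)" for q :: "'j \<times> 'a" and \<alpha> :: "'i \<times> 'a \<Rightarrow> nat"
  have hu: "((\<lambda>\<alpha>. a q \<alpha> * pmono ?P \<alpha> t) has_sum u q t) (multi_indices ?P)"
    if q: "q \<in> ?Q" and t: "\<forall>p\<in>?P. \<bar>t p\<bar> < r" for q t
  proof -
    have hsq: "\<And>t. (\<forall>p\<in>?P. \<bar>t p\<bar> < R q) \<Longrightarrow>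
      ((\<lambda>\<alpha>. A q \<alpha> * pmono ?P \<alpha> t) has_sum \<Phi> (\<lambda>i. x i + emb I t i) (fst q) \<bullet> snd q) (multi_indices ?P)"
      using RA(2) q by blast
    note sh = ps_shift[OF fP RA(1)[OF q] hsq]
    have A0: "A q (\<lambda>_. 0) = \<Phi> x (fst q) \<bullet> snd q" using sh by (simp add: x_plus_emb0)
    have "\<forall>p\<in>?P. \<bar>t p\<bar> < R q" using t r(2)[OF q] by force
    with sh have "((\<lambda>\<alpha>. (if \<alpha> = (\<lambda>_. 0) then 0 else A q \<alpha>) * pmono ?P \<alpha> t) has_sum
       \<Phi> (\<lambda>i. x i + emb I t i) (fst q) \<bullet> snd q - A q (\<lambda>_. 0)) (multi_indices ?P)" by blast
    then show ?thesis unfolding a_def u_def A0 .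
  qed
  have a0: "a q (\<lambda>_. 0) = 0" for q by (simp add: a_def)
  have "ana J (\<lambda>y. G y k \<bullet> b') (\<Phi> x)" by (rule RA_imp_ana[OF hG k b'])
  then obtain \<rho> d where \<rho>: "\<rho> > 0" and hH: "\<And>s. (\<forall>q\<in>?Q. \<bar>s q\<bar> < \<rho>) \<Longrightarrow>
      ((\<lambda>\<beta>. d \<beta> * pmono ?Q \<beta> s) has_sum G (\<lambda>j. \<Phi> x j + emb J s j) k \<bullet> b') (multi_indices ?Q)"
    unfolding ana_def by blast
  have ex: "\<exists>r'>0. \<exists>e. \<forall>t. (\<forall>p\<in>?P. \<bar>t p\<bar> < r') \<longrightarrow>
     ((\<lambda>\<gamma>. e \<gamma> * pmono ?P \<gamma> t) has_sum G (\<lambda>j. \<Phi> x j + emb J (\<lambda>q. u q t) j) k \<bullet> b') (multi_indices ?P)"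
    apply (rule ps_comp[where a=a and u=u and d=d and H="\<lambda>s. G (\<lambda>j. \<Phi> x j + emb J s j) k \<bullet> b'",
          OF fP fQ r(1) \<rho>])
      apply (rule hu; assumption)
     apply (rule a0)
    apply (rule hH; assumption)
    done
  then obtain r' e where r': "r' > 0" and he: "\<And>t. (\<forall>p\<in>?P. \<bar>t p\<bar> < r') \<Longrightarrow>
     ((\<lambda>\<gamma>. e \<gamma> * pmono ?P \<gamma> t) has_sum G (\<lambda>j. \<Phi> x j + emb J (\<lambda>q. u q t) j) k \<bullet> b') (multi_indices ?P)"
    by blast
  have key: "(\<lambda>j. \<Phi> x j + emb J (\<lambda>q. u q t) j) = \<Phi> (\<lambda>i. x i + emb I t i)" for t
  proof
    fix j
    show "\<Phi> x j + emb J (\<lambda>q. u q t) j = \<Phi> (\<lambda>i. x i + emb I t i) j"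
    proof (cases "j \<in> J")
      case True
      have "emb J (\<lambda>q. u q t) j = (\<Sum>b\<in>Basis. ((\<Phi> (\<lambda>i. x i + emb I t i) j - \<Phi> x j) \<bullet> b) *\<^sub>R b)"
        using True by (simp add: emb_def u_def inner_diff_left)
      also have "\<dots> = \<Phi> (\<lambda>i. x i + emb I t i) j - \<Phi> x j" by (rule euclidean_representation)
      finally show ?thesis by simp
    next
      case False
      then show ?thesis using \<Phi>c[of x] \<Phi>c[of "\<lambda>i. x i + emb I t i"]
        by (simp add: emb_def coord_space_def)
    qed
  qed
  show ?thesis unfolding ana_def
    by (intro exI[of _ r'] conjI exI[of _ e] allI impI r') (use he key in simp)
qed

lemma ana_coord:
  fixes x :: "'i \<Rightarrow> 'a::euclidean_space"
  assumes fI: "finite I" and v: "v \<in> I" and b: "b \<in> Basis"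
  shows "ana I (\<lambda>z. z v \<bullet> b) x"
proof -
  let ?P = "I \<times> (Basis::'a set)"
  define \<delta> where "\<delta> = (\<lambda>p. if p = (v, b) then 1 else (0::nat))"
  define a where "a \<alpha> = (if \<alpha> = (\<lambda>_. 0) then x v \<bullet> b else if \<alpha> = \<delta> then 1 else 0)" for \<alpha>
  have \<delta>mi: "\<delta> \<in> multi_indices ?P" using v b by (auto simp: multi_indices_def \<delta>_def)
  have \<delta>0: "\<delta> \<noteq> (\<lambda>_. 0)" by (auto simp: \<delta>_def fun_eq_iff)
  have pm: "pmono ?P \<delta> t = t (v, b)" for t
  proof -
    have "pmono ?P \<delta> t = (\<Prod>p\<in>?P. if p = (v, b) then t p else 1)"
      unfolding pmono_def \<delta>_def by (intro prod.cong) auto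
    also have "\<dots> = t (v, b)" using v b fI by (subst prod.delta) auto
    finally show ?thesis .
  qed
  show ?thesis unfolding ana_def
  proof (intro exI[of _ 1] conjI exI[of _ a] allI impI)
    fix t :: "'i \<times> 'a \<Rightarrow> real"
    have ev: "(x v + emb I t v) \<bullet> b = x v \<bullet> b + t (v, b)"
      using coords_emb[OF v b, of t] by (simp add: coords_def inner_add_left)
    show "((\<lambda>\<alpha>. a \<alpha> * pmono ?P \<alpha> t) has_sum (x v + emb I t v) \<bullet> b) (multi_indices ?P)"
      unfolding ev
      by (rule has_sum_finite_neutralI[where B="{\<lambda>_. 0, \<delta>}"])
         (use \<delta>mi \<delta>0 in \<open>auto simp: zero_mi a_def pm\<close>)
  qed simp
qed

lemma RA_cont:
  fixes F :: "('i \<Rightarrow> 'a::euclidean_space) \<Rightarrow> ('j \<Rightarrow> 'a)"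
  assumes fI: "finite I" and fJ: "finite J" and RA: "real_analytic_at I J F x" and \<delta>: "\<delta> > 0"
  shows "\<exists>r>0. \<forall>h\<in>coord_space I. (\<forall>i\<in>I. norm (h i) < r) \<longrightarrow> (\<forall>j\<in>J. norm (F (\<lambda>i. x i + h i) j - F x j) < \<delta>)"
proof -
  define \<delta>' where "\<delta>' = \<delta> / real DIM('a)"
  have \<delta>': "\<delta>' > 0" using \<delta> by (simp add: \<delta>'_def)
  have "\<forall>q\<in>J \<times> (Basis::'a set). \<exists>r>0. \<forall>h\<in>coord_space I. (\<forall>i\<in>I. norm (h i) < r) \<longrightarrow>
          \<bar>F (\<lambda>i. x i + h i) (fst q) \<bullet> snd q - F x (fst q) \<bullet> snd q\<bar> < \<delta>'"
  proof
    fix q assume q: "q \<in> J \<times> (Basis::'a set)"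
    show "\<exists>r>0. \<forall>h\<in>coord_space I. (\<forall>i\<in>I. norm (h i) < r) \<longrightarrow>
          \<bar>F (\<lambda>i. x i + h i) (fst q) \<bullet> snd q - F x (fst q) \<bullet> snd q\<bar> < \<delta>'"
      using ana_cont[OF fI RA_imp_ana[OF RA, of "fst q" "snd q"] \<delta>'] q by auto
  qed
  from bchoice[OF this] obtain R where R: "\<forall>q\<in>J \<times> (Basis::'a set). R q > 0 \<and> (\<forall>h\<in>coord_space I. (\<forall>i\<in>I. norm (h i) < R q) \<longrightarrow>
          \<bar>F (\<lambda>i. x i + h i) (fst q) \<bullet> snd q - F x (fst q) \<bullet> snd q\<bar> < \<delta>')" by blast
  obtain r where r: "r > 0" "\<And>q. q \<in> J \<times> (Basis::'a set) \<Longrightarrow> r \<le> R q"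
    using min_radius[of "J \<times> (Basis::'a set)" R] fJ R by auto
  show ?thesis
  proof (intro exI[of _ r] conjI ballI impI r(1))
    fix h :: "'i \<Rightarrow> 'a" and j assume h: "h \<in> coord_space I" "\<forall>i\<in>I. norm (h i) < r" and j: "j \<in> J"
    have "norm (F (\<lambda>i. x i + h i) j - F x j) \<le> (\<Sum>b\<in>Basis. \<bar>(F (\<lambda>i. x i + h i) j - F x j) \<bullet> b\<bar>)"
      by (rule norm_le_l1)
    also have "\<dots> < (\<Sum>b\<in>(Basis::'a set). \<delta>')"
    proof (rule sum_strict_mono)
      fix b :: 'a assume b: "b \<in> Basis"
      have "\<forall>i\<in>I. norm (h i) < R (j, b)" using h r(2)[of "(j, b)"] j b by force
      then show "\<bar>(F (\<lambda>i. x i + h i) j - F x j) \<bullet> b\<bar> < \<delta>'"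
        using R j b h(1) by (force simp: inner_diff_left)
    qed auto
    also have "\<dots> = \<delta>" by (simp add: \<delta>'_def)
    finally show "norm (F (\<lambda>i. x i + h i) j - F x j) < \<delta>" .
  qed
qed

lemma Inl_in_Plus[simp]: "Inl a \<in> A <+> B \<longleftrightarrow> a \<in> A" by auto
lemma Inr_in_Plus[simp]: "Inr b \<in> A <+> B \<longleftrightarrow> b \<in> B" by auto

locale GS =
  fixes L :: "('v, 'e, 'a::euclidean_space) linkage" and L' :: "('w, 'f, 'a) linkage"
    and vs :: "'v list" and ws' :: "'w list"
  assumes cL: "cabled_linkage L" and cL': "cabled_linkage L'"
    and vsL: "set vs \<subseteq> verts L" and wsL: "set ws' \<subseteq> verts L'"
    and len: "length ws' = length vs"
begin

abbreviation "RR \<equiv> glue_rel L L' vs ws'"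
abbreviation "DD \<equiv> verts L <+> verts L'"
abbreviation "V2 \<equiv> DD // RR"
abbreviation "SS \<equiv> {(Inl (vs ! i), Inr (ws' ! i)) | i. i < length vs} :: (('v + 'w) \<times> ('v + 'w)) set"

definition cls :: "'v + 'w \<Rightarrow> ('v + 'w) set" where "cls x = RR `` {x}"

definition comb :: "('v \<Rightarrow> 'a) \<Rightarrow> ('w \<Rightarrow> 'a) \<Rightarrow> ('v + 'w) set \<Rightarrow> 'a" where
  "comb \<phi> \<psi> X = (if X \<in> V2 then (if \<exists>v. Inl v \<in> X then \<phi> (SOME v. Inl v \<in> X) else \<psi> (SOME w. Inr w \<in> X)) else 0)"

definition resL :: "(('v + 'w) set \<Rightarrow> 'a) \<Rightarrow> 'v \<Rightarrow> 'a" where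
  "resL \<phi> = (\<lambda>v. if v \<in> verts L then \<phi> (cls (Inl v)) else 0)"

definition resR :: "(('v + 'w) set \<Rightarrow> 'a) \<Rightarrow> 'w \<Rightarrow> 'a" where
  "resR \<phi> = (\<lambda>w. if w \<in> verts L' then \<phi> (cls (Inr w)) else 0)"

definition compat :: "('v \<Rightarrow> 'a) \<Rightarrow> ('w \<Rightarrow> 'a) \<Rightarrow> bool" where
  "compat \<phi> \<psi> \<longleftrightarrow> (\<forall>i<length vs. \<phi> (vs ! i) = \<psi> (ws' ! i))"

lemma RR_def': "RR = Id_on DD \<union> (SS \<union> SS\<inverse>)\<^sup>+"
  unfolding glue_rel_def Let_def by simp

lemma SS_sub: "SS \<union> SS\<inverse> \<subseteq> DD \<times> DD"
  using vsL wsL len by auto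

lemma finL: "finite (verts L)" and finL': "finite (verts L')"
  using cL cL' unfolding cabled_linkage_def by blast+

lemma RR_sub: "RR \<subseteq> DD \<times> DD"
proof -
  have "(SS \<union> SS\<inverse>)\<^sup>+ \<subseteq> DD \<times> DD" using SS_sub by (rule trancl_subset_Sigma)
  then show ?thesis unfolding RR_def' by auto
qed

lemma equiv_RR: "equiv DD RR"
proof -
  let ?T = "SS \<union> SS\<inverse>"
  have Tsub: "?T\<^sup>+ \<subseteq> DD \<times> DD" using SS_sub by (rule trancl_subset_Sigma)
  have symT: "sym (?T\<^sup>+)" by (intro sym_trancl) (auto simp: sym_def)
  show ?thesis using RR_sub unfolding equiv_def RR_def'
  proof (intro conjI)
    show "refl_on DD (Id_on DD \<union> ?T\<^sup>+)" using Tsub by (auto simp: refl_on_def)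
    show "sym (Id_on DD \<union> ?T\<^sup>+)" using symT by (auto simp: sym_def)
    show "trans (Id_on DD \<union> ?T\<^sup>+)"
      unfolding trans_def by (auto intro: trancl_trans)
  qed
qed

lemma SS_RR: "i < length vs \<Longrightarrow> (Inl (vs ! i), Inr (ws' ! i)) \<in> RR"
  unfolding RR_def' by blast

lemma cls_eq: "(x, y) \<in> RR \<Longrightarrow> cls x = cls y"
  unfolding cls_def by (rule equiv_class_eq[OF equiv_RR])

lemma cls_in: "x \<in> DD \<Longrightarrow> cls x \<in> V2"
  unfolding cls_def by (rule quotientI)

lemma self_in_cls: "x \<in> DD \<Longrightarrow> x \<in> cls x"
  unfolding cls_def by (rule equiv_class_self[OF equiv_RR])

lemma V2_sub: "X \<in> V2 \<Longrightarrow> X \<subseteq> DD"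
  using equiv_RR by (metis Union_quotient Union_upper)

lemma V2_cls: "X \<in> V2 \<Longrightarrow> x \<in> X \<Longrightarrow> X = cls x"
  unfolding cls_def
proof -
  assume X: "X \<in> V2" and x: "x \<in> X"
  from X obtain a where "X = RR `` {a}" by (rule quotientE)
  with x have "(a, x) \<in> RR" by simp
  then have "RR `` {a} = RR `` {x}" by (rule equiv_class_eq[OF equiv_RR])
  with \<open>X = RR `` {a}\<close> show "X = RR `` {x}" by simp
qed

lemma V2_ne: "X \<in> V2 \<Longrightarrow> X \<noteq> {}"
  using equiv_RR by (metis in_quotient_imp_non_empty)

lemma finite_V2: "finite V2"
  by (rule finite_quotient) (use finL finL' RR_sub in auto)

lemma val_RR:
  assumes "compat \<phi> \<psi>" "(x, y) \<in> RR"
  shows "case_sum \<phi> \<psi> x = case_sum \<phi> \<psi> y"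
proof -
  have "case_sum \<phi> \<psi> x = case_sum \<phi> \<psi> y" if "(x, y) \<in> (SS \<union> SS\<inverse>)\<^sup>+"
    using that
  proof (induction rule: trancl.induct)
    case (r_into_trancl a b)
    then show ?case using assms(1) by (auto simp: compat_def)
  next
    case (trancl_into_trancl a b c)
    then show ?case using assms(1) by (auto simp: compat_def)
  qed
  then show ?thesis using assms(2) unfolding RR_def' by auto
qed

lemma comb_val:
  assumes "compat \<phi> \<psi>" "X \<in> V2" "x \<in> X"
  shows "comb \<phi> \<psi> X = case_sum \<phi> \<psi> x"
proof -
  have X: "X = cls x" by (rule V2_cls[OF assms(2,3)])
  have rel: "(x, y) \<in> RR" if "y \<in> X" for y using that X by (simp add: cls_def)
  show ?thesis
  proof (cases "\<exists>v. Inl v \<in> X")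
    case True
    then have "Inl (SOME v. Inl v \<in> X) \<in> X" by (rule someI_ex)
    then have "case_sum \<phi> \<psi> x = case_sum \<phi> \<psi> (Inl (SOME v. Inl v \<in> X))"
      by (rule val_RR[OF assms(1) rel])
    then show ?thesis using True assms(2) by (simp add: comb_def)
  next
    case False
    then obtain w where "x = Inr w" using assms(3) by (cases x) auto
    then have "\<exists>w. Inr w \<in> X" using assms(3) by auto
    then have "Inr (SOME w. Inr w \<in> X) \<in> X" by (rule someI_ex)
    then have "case_sum \<phi> \<psi> x = case_sum \<phi> \<psi> (Inr (SOME w. Inr w \<in> X))"
      by (rule val_RR[OF assms(1) rel])
    then show ?thesis using False assms(2) by (simp add: comb_def)
  qed
qed

lemma comb_Inl: "compat \<phi> \<psi> \<Longrightarrow> v \<in> verts L \<Longrightarrow> comb \<phi> \<psi> (cls (Inl v)) = \<phi> v"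
  using comb_val[of \<phi> \<psi> "cls (Inl v)" "Inl v"] cls_in self_in_cls by auto

lemma comb_Inr: "compat \<phi> \<psi> \<Longrightarrow> w \<in> verts L' \<Longrightarrow> comb \<phi> \<psi> (cls (Inr w)) = \<psi> w"
  using comb_val[of \<phi> \<psi> "cls (Inr w)" "Inr w"] cls_in self_in_cls by auto


abbreviation "LL \<equiv> glue L L' vs ws'"
abbreviation "FX \<equiv> fixed L <+> fixed L'"
abbreviation "poss \<equiv> case_sum (pos L) (pos L')"

lemma glue_simps:
  "verts LL = V2" "edges LL = edges L <+> edges L'"
  "ends LL (Inl e) = (cls (Inl (fst (ends L e))), cls (Inl (snd (ends L e))))"
  "ends LL (Inr e') = (cls (Inr (fst (ends L' e'))), cls (Inr (snd (ends L' e'))))"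
  "len LL (Inl e) = len L e" "len LL (Inr e') = len L' e'"
  "fixed LL = {X \<in> V2. X \<inter> FX \<noteq> {}}"
  "pos LL X = poss (SOME x. x \<in> X \<inter> FX)"
  "flex LL = flex L <+> flex L'"
  by (simp_all add: glue_def Let_def cls_def)

lemma glue_inputs_eq: "glue_inputs L L' vs ws' ws = map (\<lambda>v. cls (Inl v)) ws"
  by (simp add: glue_inputs_def cls_def)

lemma glue_outputs_eq: "glue_outputs L L' vs ws' vs' = map (\<lambda>w. cls (Inr w)) vs'"
  by (simp add: glue_outputs_def cls_def)

lemma endsL: "e \<in> edges L \<Longrightarrow> fst (ends L e) \<in> verts L \<and> snd (ends L e) \<in> verts L"
  using cL unfolding cabled_linkage_def by blast
lemma endsL': "e \<in> edges L' \<Longrightarrow> fst (ends L' e) \<in> verts L' \<and> snd (ends L' e) \<in> verts L'"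
  using cL' unfolding cabled_linkage_def by blast
lemma flexL: "flex L \<subseteq> edges L" and flexL': "flex L' \<subseteq> edges L'"
  using cL cL' unfolding cabled_linkage_def by blast+
lemma fixedL: "fixed L \<subseteq> verts L" and fixedL': "fixed L' \<subseteq> verts L'"
  using cL cL' unfolding cabled_linkage_def by blast+

lemma fixed_val:
  assumes "\<phi> \<in> config_space L" "\<psi> \<in> config_space L'" "x \<in> FX"
  shows "case_sum \<phi> \<psi> x = poss x"
  using assms by (cases x) (auto simp: config_space_def)

lemma comb_config:
  assumes \<phi>: "\<phi> \<in> config_space L" and \<psi>: "\<psi> \<in> config_space L'" and c: "compat \<phi> \<psi>"
  shows "comb \<phi> \<psi> \<in> config_space LL"
proof -
  have \<phi>1: "\<And>e. e \<in> flex L \<Longrightarrow> dist (\<phi> (fst (ends L e))) (\<phi> (snd (ends L e))) \<le> len L e"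
   and \<phi>2: "\<And>e. e \<in> edges L - flex L \<Longrightarrow> dist (\<phi> (fst (ends L e))) (\<phi> (snd (ends L e))) = len L e"
    using \<phi> unfolding config_space_def by blast+
  have \<psi>1: "\<And>e. e \<in> flex L' \<Longrightarrow> dist (\<psi> (fst (ends L' e))) (\<psi> (snd (ends L' e))) \<le> len L' e"
   and \<psi>2: "\<And>e. e \<in> edges L' - flex L' \<Longrightarrow> dist (\<psi> (fst (ends L' e))) (\<psi> (snd (ends L' e))) = len L' e"
    using \<psi> unfolding config_space_def by blast+
  show ?thesis
  unfolding config_space_def mem_Collect_eq
  proof (intro conjI allI impI ballI)
    fix X assume "X \<notin> verts LL"
    then show "comb \<phi> \<psi> X = 0" by (simp add: glue_simps comb_def)
  next
    fix X assume "X \<in> fixed LL"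
    then have XX: "X \<in> V2 \<and> X \<inter> FX \<noteq> {}" unfolding glue_simps by (rule CollectD)
    then have X: "X \<in> V2" and ne0: "X \<inter> FX \<noteq> {}" by (rule conjunct1, rule conjunct2)
    from ne0 have ne: "\<exists>x. x \<in> X \<inter> FX" by blast
    have xs: "(SOME x. x \<in> X \<inter> FX) \<in> X \<inter> FX" using ne by (rule someI_ex)
    have xX: "(SOME x. x \<in> X \<inter> FX) \<in> X" and xF: "(SOME x. x \<in> X \<inter> FX) \<in> FX"
      using xs by (rule IntD1, rule IntD2)
    have "comb \<phi> \<psi> X = case_sum \<phi> \<psi> (SOME x. x \<in> X \<inter> FX)"
      by (rule comb_val[OF c X xX])
    also have "\<dots> = poss (SOME x. x \<in> X \<inter> FX)" by (rule fixed_val[OF \<phi> \<psi> xF])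
    finally show "comb \<phi> \<psi> X = pos LL X" by (simp only: glue_simps)
  next
    fix e assume e: "e \<in> flex LL"
    show "dist (comb \<phi> \<psi> (fst (ends LL e))) (comb \<phi> \<psi> (snd (ends LL e))) \<le> len LL e"
    proof (cases e)
      case (Inl e1)
      with e have e1: "e1 \<in> flex L" by (simp add: glue_simps)
      then have "e1 \<in> edges L" using flexL by auto
      then have "comb \<phi> \<psi> (cls (Inl (fst (ends L e1)))) = \<phi> (fst (ends L e1))"
         "comb \<phi> \<psi> (cls (Inl (snd (ends L e1)))) = \<phi> (snd (ends L e1))"
        using endsL comb_Inl[OF c] by auto
      then show ?thesis using Inl \<phi>1[OF e1] by (simp only: glue_simps fst_conv snd_conv)
    next
      case (Inr e1)
      with e have e1: "e1 \<in> flex L'" by (simp add: glue_simps)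
      then have "e1 \<in> edges L'" using flexL' by auto
      then have "comb \<phi> \<psi> (cls (Inr (fst (ends L' e1)))) = \<psi> (fst (ends L' e1))"
         "comb \<phi> \<psi> (cls (Inr (snd (ends L' e1)))) = \<psi> (snd (ends L' e1))"
        using endsL' comb_Inr[OF c] by auto
      then show ?thesis using Inr \<psi>1[OF e1] by (simp only: glue_simps fst_conv snd_conv)
    qed
  next
    fix e assume e: "e \<in> edges LL - flex LL"
    show "dist (comb \<phi> \<psi> (fst (ends LL e))) (comb \<phi> \<psi> (snd (ends LL e))) = len LL e"
    proof (cases e)
      case (Inl e1)
      with e have e1: "e1 \<in> edges L - flex L" by (simp add: glue_simps)
      then have "comb \<phi> \<psi> (cls (Inl (fst (ends L e1)))) = \<phi> (fst (ends L e1))"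
         "comb \<phi> \<psi> (cls (Inl (snd (ends L e1)))) = \<phi> (snd (ends L e1))"
        using endsL comb_Inl[OF c] by auto
      then show ?thesis using Inl \<phi>2[OF e1] by (simp only: glue_simps fst_conv snd_conv)
    next
      case (Inr e1)
      with e have e1: "e1 \<in> edges L' - flex L'" by (simp add: glue_simps)
      then have "comb \<phi> \<psi> (cls (Inr (fst (ends L' e1)))) = \<psi> (fst (ends L' e1))"
         "comb \<phi> \<psi> (cls (Inr (snd (ends L' e1)))) = \<psi> (snd (ends L' e1))"
        using endsL' comb_Inr[OF c] by auto
      then show ?thesis using Inr \<psi>2[OF e1] by (simp only: glue_simps fst_conv snd_conv)
    qed
  qed
qed

definition poscons :: bool where
  "poscons \<longleftrightarrow> (\<forall>X\<in>V2. \<forall>x\<in>X \<inter> FX. \<forall>y\<in>X \<inter> FX. poss x = poss y)"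

lemma poscons_pair:
  assumes \<phi>: "\<phi> \<in> config_space L" and \<psi>: "\<psi> \<in> config_space L'" and c: "compat \<phi> \<psi>"
  shows poscons
  unfolding poscons_def
proof (intro ballI)
  fix X x y assume X: "X \<in> V2" and x: "x \<in> X \<inter> FX" and y: "y \<in> X \<inter> FX"
  have "case_sum \<phi> \<psi> x = case_sum \<phi> \<psi> y"
    using comb_val[OF c X, of x] comb_val[OF c X, of y] x y by auto
  then show "poss x = poss y" using fixed_val[OF \<phi> \<psi>] x y by auto
qed

lemma res_config:
  assumes pc: poscons and \<phi>: "\<phi> \<in> config_space LL"
  shows "resL \<phi> \<in> config_space L" "resR \<phi> \<in> config_space L'" "compat (resL \<phi>) (resR \<phi>)"
proof -
  have \<phi>fix: "\<And>X. X \<in> fixed LL \<Longrightarrow> \<phi> X = pos LL X"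
   and \<phi>1: "\<And>e. e \<in> flex LL \<Longrightarrow> dist (\<phi> (fst (ends LL e))) (\<phi> (snd (ends LL e))) \<le> len LL e"
   and \<phi>2: "\<And>e. e \<in> edges LL - flex LL \<Longrightarrow> dist (\<phi> (fst (ends LL e))) (\<phi> (snd (ends LL e))) = len LL e"
    using \<phi> unfolding config_space_def by blast+
  have pc': "\<And>X x y. X \<in> V2 \<Longrightarrow> x \<in> X \<inter> FX \<Longrightarrow> y \<in> X \<inter> FX \<Longrightarrow> poss x = poss y"
    using pc unfolding poscons_def by blast
  have fix_cls: "\<phi> (cls x) = poss x" if x: "x \<in> FX" for x
  proof -
    have xD: "x \<in> DD" using x fixedL fixedL' by (cases x) auto
    define X where "X = cls x"
    have X: "X \<in> V2" unfolding X_def by (rule cls_in[OF xD])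
    have xX: "x \<in> X \<inter> FX" unfolding X_def using self_in_cls[OF xD] x by (rule IntI)
    have "X \<inter> FX \<noteq> {}"
    proof
      assume "X \<inter> FX = {}" with xX show False by (simp only: empty_iff)
    qed
    then have Xf: "X \<in> fixed LL" unfolding glue_simps using X by (intro CollectI conjI)
    have xs: "(SOME x. x \<in> X \<inter> FX) \<in> X \<inter> FX" using xX by (rule someI)
    have "\<phi> X = pos LL X" by (rule \<phi>fix[OF Xf])
    also have "\<dots> = poss (SOME x. x \<in> X \<inter> FX)" by (simp only: glue_simps)
    also have "\<dots> = poss x" by (rule pc'[OF X xs xX])
    finally show ?thesis unfolding X_def .
  qed
  show "resL \<phi> \<in> config_space L"
    unfolding config_space_def mem_Collect_eq
  proof (intro conjI allI impI ballI)
    fix v assume "v \<notin> verts L" then show "resL \<phi> v = 0" by (simp add: resL_def)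
  next
    fix v assume v: "v \<in> fixed L"
    then have "v \<in> verts L" using fixedL by auto
    moreover have "Inl v \<in> FX" using v by simp
    ultimately show "resL \<phi> v = pos L v" using fix_cls[of "Inl v"] by (simp add: resL_def)
  next
    fix e assume e: "e \<in> flex L"
    then have e': "e \<in> edges L" using flexL by auto
    have "Inl e \<in> flex LL" using e by (simp add: glue_simps)
    from \<phi>1[OF this] show "dist (resL \<phi> (fst (ends L e))) (resL \<phi> (snd (ends L e))) \<le> len L e"
      using endsL[OF e'] by (simp add: glue_simps resL_def)
  next
    fix e assume e: "e \<in> edges L - flex L"
    have "Inl e \<in> edges LL - flex LL" using e by (simp add: glue_simps)
    from \<phi>2[OF this] show "dist (resL \<phi> (fst (ends L e))) (resL \<phi> (snd (ends L e))) = len L e"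
      using endsL[of e] e by (simp add: glue_simps resL_def)
  qed
  show "resR \<phi> \<in> config_space L'"
    unfolding config_space_def mem_Collect_eq
  proof (intro conjI allI impI ballI)
    fix v assume "v \<notin> verts L'" then show "resR \<phi> v = 0" by (simp add: resR_def)
  next
    fix v assume v: "v \<in> fixed L'"
    then have "v \<in> verts L'" using fixedL' by auto
    moreover have "Inr v \<in> FX" using v by simp
    ultimately show "resR \<phi> v = pos L' v" using fix_cls[of "Inr v"] by (simp add: resR_def)
  next
    fix e assume e: "e \<in> flex L'"
    then have e': "e \<in> edges L'" using flexL' by auto
    have "Inr e \<in> flex LL" using e by (simp add: glue_simps)
    from \<phi>1[OF this] show "dist (resR \<phi> (fst (ends L' e))) (resR \<phi> (snd (ends L' e))) \<le> len L' e"
      using endsL'[OF e'] by (simp add: glue_simps resR_def)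
  next
    fix e assume e: "e \<in> edges L' - flex L'"
    have "Inr e \<in> edges LL - flex LL" using e by (simp add: glue_simps)
    from \<phi>2[OF this] show "dist (resR \<phi> (fst (ends L' e))) (resR \<phi> (snd (ends L' e))) = len L' e"
      using endsL'[of e] e by (simp add: glue_simps resR_def)
  qed
  show "compat (resL \<phi>) (resR \<phi>)"
    unfolding compat_def
  proof (intro allI impI)
    fix i assume i: "i < length vs"
    have a: "vs ! i \<in> verts L" using vsL i by auto
    have b: "ws' ! i \<in> verts L'" using wsL i len by auto
    show "resL \<phi> (vs ! i) = resR \<phi> (ws' ! i)"
      using a b cls_eq[OF SS_RR[OF i]] by (simp add: resL_def resR_def)
  qed
qed

lemma res_comb:
  assumes \<phi>: "\<phi> \<in> config_space L" and \<psi>: "\<psi> \<in> config_space L'" and c: "compat \<phi> \<psi>"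
  shows "resL (comb \<phi> \<psi>) = \<phi>" "resR (comb \<phi> \<psi>) = \<psi>"
  using \<phi> \<psi> by (auto simp: fun_eq_iff resL_def resR_def comb_Inl[OF c] comb_Inr[OF c] config_space_def)

lemma comb_res:
  assumes \<phi>: "\<phi> \<in> config_space LL"
  shows "comb (resL \<phi>) (resR \<phi>) = \<phi>"
proof
  fix X
  show "comb (resL \<phi>) (resR \<phi>) X = \<phi> X"
  proof (cases "X \<in> V2")
    case False
    then show ?thesis using \<phi> by (simp add: comb_def config_space_def glue_simps)
  next
    case X: True
    show ?thesis
    proof (cases "\<exists>v. Inl v \<in> X")
      case True
      then have xs: "Inl (SOME v. Inl v \<in> X) \<in> X" by (rule someI_ex)
      then have "(SOME v. Inl v \<in> X) \<in> verts L" using V2_sub[OF X] by auto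
      then show ?thesis using True X xs V2_cls[OF X xs] by (simp add: comb_def resL_def)
    next
      case False
      obtain x where x: "x \<in> X" using V2_ne[OF X] by auto
      with False obtain w where "Inr w \<in> X" by (cases x) auto
      then have xs: "Inr (SOME w. Inr w \<in> X) \<in> X" by (rule someI)
      then have "(SOME w. Inr w \<in> X) \<in> verts L'" using V2_sub[OF X] by auto
      then show ?thesis using False X xs V2_cls[OF X xs] by (simp add: comb_def resR_def)
    qed
  qed
qed

lemma tuple_resL: "set ws \<subseteq> verts L \<Longrightarrow> tuple_map (map (\<lambda>v. cls (Inl v)) ws) \<phi> = tuple_map ws (resL \<phi>)"
  unfolding tuple_map_def resL_def by (auto simp: fun_eq_iff dest: nth_mem)

lemma tuple_resR: "set ws \<subseteq> verts L' \<Longrightarrow> tuple_map (map (\<lambda>w. cls (Inr w)) ws) \<phi> = tuple_map ws (resR \<phi>)"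
  unfolding tuple_map_def resR_def by (auto simp: fun_eq_iff dest: nth_mem)

lemma compat_tuple: "compat \<phi> \<psi> \<longleftrightarrow> tuple_map vs \<phi> = tuple_map ws' \<psi>"
  using len by (auto simp: compat_def tuple_map_def fun_eq_iff)

end

lemma cont_eval: "continuous_on S (\<lambda>\<phi>::'i \<Rightarrow> 'b::topological_space. \<phi> v)"
  by (rule continuous_on_product_then_coordinatewise[OF continuous_on_id])

lemma cont_eval_comp: "continuous_on S a \<Longrightarrow> continuous_on S (\<lambda>x. a x v)"
  by (rule continuous_on_product_then_coordinatewise)

lemma cont_tuple: "continuous_on S (tuple_map ws :: ('v \<Rightarrow> 'b::{real_normed_vector}) \<Rightarrow> _)"
proof (rule continuous_on_coordinatewise_then_product)
  fix i
  show "continuous_on S (\<lambda>x. tuple_map ws x i)"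
    by (cases "i < length ws") (simp_all add: tuple_map_def cont_eval)
qed

lemma RA_tuple:
  fixes ws :: "'v list"
  assumes fV: "finite V" and ws: "set ws \<subseteq> V"
  shows "real_analytic_at V {..<length ws} (tuple_map ws) (x :: 'v \<Rightarrow> 'a::euclidean_space)"
proof (rule ana_imp_RA)
  fix i and b :: 'a assume i: "i \<in> {..<length ws}" and b: "b \<in> Basis"
  have "(\<lambda>z. tuple_map ws z i \<bullet> b) = (\<lambda>z. z (ws ! i) \<bullet> b)" using i by (simp add: tuple_map_def)
  moreover have "ana V (\<lambda>z. z (ws ! i) \<bullet> b) x"
    by (rule ana_coord[OF fV _ b]) (use ws i in auto)
  ultimately show "ana V (\<lambda>z. tuple_map ws z i \<bullet> b) x" by simp
qed simp

lemma open_coord_space: "open_in_coords V (coord_space V)"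
  by (auto simp: open_in_coords_def coord_space_def intro: exI[of _ 1])

lemma AR_tuple:
  fixes ws :: "'v list"
  assumes fV: "finite V" and ws: "set ws \<subseteq> V" and A: "A \<subseteq> coord_space V"
  shows "analytic_restriction V {..<length ws} (tuple_map ws :: ('v \<Rightarrow> 'a::euclidean_space) \<Rightarrow> _) A"
  unfolding analytic_restriction_def
  by (intro exI[of _ "coord_space V"] exI[of _ "tuple_map ws"] conjI open_coord_space A ballI RA_tuple fV ws refl)

lemma tuple_coord: "tuple_map ws \<phi> \<in> coord_space {..<length ws}"
  by (simp add: tuple_map_def coord_space_def)

lemma analytic_restriction_cong:
  "analytic_restriction I J f A \<Longrightarrow> (\<And>x. x \<in> A \<Longrightarrow> f x = g x) \<Longrightarrow> analytic_restriction I J g A"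
  unfolding analytic_restriction_def by metis

context GS
begin

lemma cont_comb:
  assumes "continuous_on S a" "continuous_on S b"
  shows "continuous_on S (\<lambda>x. comb (a x) (b x))"
proof (rule continuous_on_coordinatewise_then_product)
  fix X
  show "continuous_on S (\<lambda>x. comb (a x) (b x) X)"
    unfolding comb_def using assms
    by (cases "X \<in> V2"; cases "\<exists>v. Inl v \<in> X") (simp_all add: cont_eval_comp)
qed

lemma cont_resL: "continuous_on S resL"
proof (rule continuous_on_coordinatewise_then_product)
  fix v show "continuous_on S (\<lambda>x. resL x v)"
    unfolding resL_def by (cases "v \<in> verts L") (simp_all add: cont_eval)
qed

lemma cont_resR: "continuous_on S resR"
proof (rule continuous_on_coordinatewise_then_product)
  fix v show "continuous_on S (\<lambda>x. resR x v)"
    unfolding resR_def by (cases "v \<in> verts L'") (simp_all add: cont_eval)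
qed

lemma AR_glue:
  fixes s1 :: "(nat \<Rightarrow> 'a) \<Rightarrow> ('v \<Rightarrow> 'a)" and s2 :: "(nat \<Rightarrow> 'a) \<Rightarrow> ('w \<Rightarrow> 'a)"
  assumes h1: "analytic_restriction {..<k} (verts L) s1 Aa"
    and h2: "analytic_restriction {..<length ws'} (verts L') s2 Ab"
    and AAa: "A \<subseteq> Aa" and AAb: "\<And>u. u \<in> A \<Longrightarrow> tuple_map vs (s1 u) \<in> Ab"
  shows "analytic_restriction {..<k} V2 (\<lambda>u. comb (s1 u) (s2 (tuple_map vs (s1 u)))) A"
proof -
  let ?m = "length ws'"
  obtain W1 F1 where W1: "open_in_coords {..<k} W1" "Aa \<subseteq> W1"
      and F1: "\<And>x. x \<in> W1 \<Longrightarrow> real_analytic_at {..<k} (verts L) F1 x" and s1F: "\<And>x. x \<in> Aa \<Longrightarrow> s1 x = F1 x"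
    using h1 unfolding analytic_restriction_def by blast
  obtain W2 F2 where W2: "open_in_coords {..<?m} W2" "Ab \<subseteq> W2"
      and F2: "\<And>x. x \<in> W2 \<Longrightarrow> real_analytic_at {..<?m} (verts L') F2 x" and s2F: "\<And>x. x \<in> Ab \<Longrightarrow> s2 x = F2 x"
    using h2 unfolding analytic_restriction_def by blast
  define W where "W = {u \<in> W1. tuple_map vs (F1 u) \<in> W2}"
  define FF where "FF u = comb (F1 u) (F2 (tuple_map vs (F1 u)))" for u
  have Wop: "open_in_coords {..<k} W"
    unfolding open_in_coords_def
  proof (intro conjI ballI)
    show "W \<subseteq> coord_space {..<k}" using W1(1) unfolding W_def open_in_coords_def by auto
    fix u assume u: "u \<in> W"
    then have uW1: "u \<in> W1" and pu: "tuple_map vs (F1 u) \<in> W2" by (auto simp: W_def)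
    obtain r1 where r1: "r1 > 0" "\<forall>h\<in>coord_space {..<k}. (\<forall>i\<in>{..<k}. norm (h i) < r1) \<longrightarrow> (\<lambda>i. u i + h i) \<in> W1"
      using W1(1) uW1 unfolding open_in_coords_def by blast
    obtain r2 where r2: "r2 > 0" "\<forall>h\<in>coord_space {..<?m}. (\<forall>i\<in>{..<?m}. norm (h i) < r2) \<longrightarrow>
          (\<lambda>i. tuple_map vs (F1 u) i + h i) \<in> W2"
      using W2(1) pu unfolding open_in_coords_def by blast
    obtain r3 where r3: "r3 > 0" "\<forall>h\<in>coord_space {..<k}. (\<forall>i\<in>{..<k}. norm (h i) < r3) \<longrightarrow>
          (\<forall>j\<in>verts L. norm (F1 (\<lambda>i. u i + h i) j - F1 u j) < r2)"
      using RA_cont[OF _ finL F1[OF uW1] r2(1)] by auto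
    show "\<exists>r>0. \<forall>h\<in>coord_space {..<k}. (\<forall>i\<in>{..<k}. norm (h i) < r) \<longrightarrow> (\<lambda>i. u i + h i) \<in> W"
    proof (intro exI[of _ "min r1 r3"] conjI ballI impI)
      show "0 < min r1 r3" using r1 r3 by simp
      fix h :: "nat \<Rightarrow> 'a" assume h: "h \<in> coord_space {..<k}" "\<forall>i\<in>{..<k}. norm (h i) < min r1 r3"
      have in1: "(\<lambda>i. u i + h i) \<in> W1" using r1(2) h by auto
      have cl: "\<forall>j\<in>verts L. norm (F1 (\<lambda>i. u i + h i) j - F1 u j) < r2" using r3(2) h by auto
      define h2 where "h2 i = (if i < length vs then F1 (\<lambda>i. u i + h i) (vs ! i) - F1 u (vs ! i) else 0)" for i
      have h2c: "h2 \<in> coord_space {..<?m}" using len by (simp add: h2_def coord_space_def)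
      have h2n: "\<forall>i\<in>{..<?m}. norm (h2 i) < r2"
        using cl vsL len r2(1) by (auto simp: h2_def dest!: nth_mem)
      have "(\<lambda>i. tuple_map vs (F1 u) i + h2 i) \<in> W2" using r2(2) h2c h2n by blast
      moreover have "(\<lambda>i. tuple_map vs (F1 u) i + h2 i) = tuple_map vs (F1 (\<lambda>i. u i + h i))"
        by (auto simp: fun_eq_iff tuple_map_def h2_def)
      ultimately show "(\<lambda>i. u i + h i) \<in> W" using in1 by (simp add: W_def)
    qed
  qed
  have AW: "A \<subseteq> W"
  proof
    fix u assume u: "u \<in> A"
    then have "u \<in> Aa" using AAa by auto
    then show "u \<in> W" using AAb[OF u] W1(2) W2(2) s1F unfolding W_def by auto
  qed
  have RAW: "real_analytic_at {..<k} V2 FF x" if x: "x \<in> W" for x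
  proof (rule ana_imp_RA[OF finite_V2])
    fix X and b :: 'a assume X: "X \<in> V2" and b: "b \<in> Basis"
    have xW1: "x \<in> W1" and px: "tuple_map vs (F1 x) \<in> W2" using x by (auto simp: W_def)
    show "ana {..<k} (\<lambda>z. FF z X \<bullet> b) x"
    proof (cases "\<exists>v. Inl v \<in> X")
      case True
      define v0 where "v0 = (SOME v. Inl v \<in> X)"
      have "Inl v0 \<in> X" unfolding v0_def using True by (rule someI_ex)
      then have v0: "v0 \<in> verts L" using V2_sub[OF X] by auto
      have "(\<lambda>z. FF z X \<bullet> b) = (\<lambda>z. F1 z v0 \<bullet> b)"
        using X True by (simp add: FF_def comb_def v0_def)
      then show ?thesis using RA_imp_ana[OF F1[OF xW1] v0 b] by simp
    next
      case False
      obtain x0 where "x0 \<in> X" using V2_ne[OF X] by auto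
      with False obtain w where "Inr w \<in> X" by (cases x0) auto
      define w0 where "w0 = (SOME w. Inr w \<in> X)"
      have "Inr w0 \<in> X" unfolding w0_def using \<open>Inr w \<in> X\<close> by (rule someI)
      then have w0: "w0 \<in> verts L'" using V2_sub[OF X] by auto
      have eq: "(\<lambda>z. FF z X \<bullet> b) = (\<lambda>z. F2 (tuple_map vs (F1 z)) w0 \<bullet> b)"
        using X False by (simp add: FF_def comb_def w0_def)
      have "ana {..<k} (\<lambda>z. F2 (tuple_map vs (F1 z)) w0 \<bullet> b) x"
      proof (rule ana_comp[where J="{..<?m}" and K="verts L'" and \<Phi>="\<lambda>z. tuple_map vs (F1 z)" and G=F2])
        show "finite {..<k}" by simp
        show "finite {..<?m}" by simp
        fix j and b' :: 'a assume j: "j \<in> {..<?m}" and b': "b' \<in> Basis"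
        have vj: "vs ! j \<in> verts L" using j vsL len by auto
        have "(\<lambda>z. tuple_map vs (F1 z) j \<bullet> b') = (\<lambda>z. F1 z (vs ! j) \<bullet> b')"
          using j len by (simp add: tuple_map_def)
        then show "ana {..<k} (\<lambda>z. tuple_map vs (F1 z) j \<bullet> b') x"
          using RA_imp_ana[OF F1[OF xW1] vj b'] by simp
      next
        show "\<And>z. tuple_map vs (F1 z) \<in> coord_space {..<?m}" using tuple_coord[of vs] len by simp
        show "real_analytic_at {..<?m} (verts L') F2 (tuple_map vs (F1 x))" by (rule F2[OF px])
        show "w0 \<in> verts L'" by (rule w0)
        show "b \<in> Basis" by (rule b)
      qed
      then show ?thesis using eq by simp
    qed
  qed
  show ?thesis
    unfolding analytic_restriction_def
  proof (intro exI[of _ W] exI[of _ FF] conjI Wop AW ballI RAW)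
    fix u assume u: "u \<in> A"
    then have u1: "u \<in> Aa" using AAa by auto
    have "tuple_map vs (s1 u) \<in> Ab" by (rule AAb[OF u])
    then show "comb (s1 u) (s2 (tuple_map vs (s1 u))) = FF u"
      using s1F[OF u1] s2F by (simp add: FF_def)
  qed
qed

end

lemma open_nat_prod: "open (A :: (nat \<times> nat) set)"
proof -
  have "A = (\<Union>p\<in>A. {fst p} \<times> {snd p})" by auto
  also have "open \<dots>" by (intro open_UN ballI open_Times open_discrete)
  finally show ?thesis .
qed

lemma cont_nat2:
  fixes h1 h2 :: "'x::topological_space \<Rightarrow> nat"
  assumes "continuous_on S h1" "continuous_on S h2"
  shows "continuous_on S (\<lambda>x. F (h1 x) (h2 x) :: 'b::topological_space)"
proof -
  have c: "continuous_on UNIV (\<lambda>p::nat \<times> nat. F (fst p) (snd p))"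
    unfolding continuous_on_open_invariant by (auto intro: open_nat_prod)
  have "continuous_on S (\<lambda>x. (h1 x, h2 x))" by (rule continuous_on_Pair[OF assms])
  from continuous_on_compose2[OF c this] show ?thesis by simp
qed

locale GS2 = GS L L' vs ws'
  for L :: "('v, 'e, 'a::euclidean_space) linkage" and L' :: "('w, 'f, 'a) linkage"
    and vs :: "'v list" and ws' :: "'w list" +
  fixes ws :: "'v list" and vs' :: "'w list" and f g :: "(nat \<Rightarrow> 'a) \<Rightarrow> (nat \<Rightarrow> 'a)"
    and U U' :: "(nat \<Rightarrow> 'a) set"
  assumes qL: "quasifunctional L ws vs f" and qL': "quasifunctional L' ws' vs' g"
    and UC: "U \<subseteq> tuple_map ws ` config_space L" and UC': "U' \<subseteq> tuple_map ws' ` config_space L'"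
    and ne: "U \<inter> f -` U' \<noteq> {}"
begin

abbreviation "ws2 \<equiv> map (\<lambda>v. cls (Inl v)) ws"
abbreviation "vs2 \<equiv> map (\<lambda>w. cls (Inr w)) vs'"

lemma wsL0: "set ws \<subseteq> verts L" and vsL0': "set vs' \<subseteq> verts L'"
  using qL qL' unfolding quasifunctional_def by auto

lemma qfL: "\<phi> \<in> config_space L \<Longrightarrow> tuple_map vs \<phi> = f (tuple_map ws \<phi>)"
  using qL unfolding quasifunctional_def by auto

lemma qfL': "\<psi> \<in> config_space L' \<Longrightarrow> tuple_map vs' \<psi> = g (tuple_map ws' \<psi>)"
  using qL' unfolding quasifunctional_def by auto

lemma pc: poscons
proof -
  obtain u where u: "u \<in> U" "f u \<in> U'" using ne by auto
  obtain \<phi> where \<phi>: "\<phi> \<in> config_space L" "tuple_map ws \<phi> = u" using UC u(1) by auto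
  obtain \<psi> where \<psi>: "\<psi> \<in> config_space L'" "tuple_map ws' \<psi> = f u" using UC' u(2) by auto
  have "compat \<phi> \<psi>" unfolding compat_tuple using qfL[OF \<phi>(1)] \<phi>(2) \<psi>(2) by simp
  then show ?thesis by (rule poscons_pair[OF \<phi>(1) \<psi>(1)])
qed

lemma q2_res: "tuple_map ws2 \<phi> = tuple_map ws (resL \<phi>)"
  by (rule tuple_resL[OF wsL0])

lemma p2_res: "tuple_map vs2 \<phi> = tuple_map vs' (resR \<phi>)"
  by (rule tuple_resR[OF vsL0'])

lemma res_compat_tuple:
  "\<phi> \<in> config_space LL \<Longrightarrow> tuple_map ws' (resR \<phi>) = tuple_map vs (resL \<phi>)"
  using res_config(3)[OF pc] unfolding compat_tuple by simp

lemma quasi2: "quasifunctional LL ws2 vs2 (g \<circ> f)"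
  unfolding quasifunctional_def
proof (intro conjI ballI)
  show "set ws2 \<subseteq> verts LL" using wsL0 by (auto simp: glue_simps intro!: cls_in)
  show "set vs2 \<subseteq> verts LL" using vsL0' by (auto simp: glue_simps intro!: cls_in)
  fix \<phi> assume \<phi>: "\<phi> \<in> config_space LL"
  have r: "resL \<phi> \<in> config_space L" "resR \<phi> \<in> config_space L'" using res_config[OF pc \<phi>] by auto
  have "tuple_map vs2 \<phi> = g (tuple_map ws' (resR \<phi>))" using p2_res qfL'[OF r(2)] by simp
  also have "\<dots> = g (f (tuple_map ws (resL \<phi>)))" using res_compat_tuple[OF \<phi>] qfL[OF r(1)] by simp
  finally show "tuple_map vs2 \<phi> = (g \<circ> f) (tuple_map ws2 \<phi>)" by (simp add: q2_res)
qed

lemma comb_facts: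
  assumes \<phi>: "\<phi> \<in> config_space L" and \<psi>: "\<psi> \<in> config_space L'" and e: "tuple_map ws' \<psi> = f (tuple_map ws \<phi>)"
  shows "comb \<phi> \<psi> \<in> config_space LL" "resL (comb \<phi> \<psi>) = \<phi>" "resR (comb \<phi> \<psi>) = \<psi>"
    "tuple_map ws2 (comb \<phi> \<psi>) = tuple_map ws \<phi>"
proof -
  have c: "compat \<phi> \<psi>" unfolding compat_tuple using qfL[OF \<phi>] e by simp
  show "comb \<phi> \<psi> \<in> config_space LL" by (rule comb_config[OF \<phi> \<psi> c])
  show r1: "resL (comb \<phi> \<psi>) = \<phi>" by (rule res_comb(1)[OF \<phi> \<psi> c])
  show "resR (comb \<phi> \<psi>) = \<psi>" by (rule res_comb(2)[OF \<phi> \<psi> c])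
  show "tuple_map ws2 (comb \<phi> \<psi>) = tuple_map ws \<phi>" by (simp add: q2_res r1)
qed

lemma U2_sub: "U \<inter> f -` U' \<subseteq> tuple_map ws2 ` config_space LL"
proof
  fix u assume u: "u \<in> U \<inter> f -` U'"
  obtain \<phi> where \<phi>: "\<phi> \<in> config_space L" "tuple_map ws \<phi> = u" using UC u by auto
  obtain \<psi> where \<psi>: "\<psi> \<in> config_space L'" "tuple_map ws' \<psi> = f u" using UC' u by auto
  note cf = comb_facts[OF \<phi>(1) \<psi>(1)]
  show "u \<in> tuple_map ws2 ` config_space LL"
    using cf \<phi>(2) \<psi>(2) by (intro image_eqI[of _ _ "comb \<phi> \<psi>"]) auto
qed


lemma functional_part:
  assumes FL: "functional_on L ws vs f U" and FL': "functional_on L' ws' vs' g U'"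
  shows "functional_on LL ws2 vs2 (g \<circ> f) (U \<inter> f -` U')"
proof -
  define D where "D = {\<phi> \<in> config_space L. tuple_map ws \<phi> \<in> U}"
  define D' where "D' = {\<psi> \<in> config_space L'. tuple_map ws' \<psi> \<in> U'}"
  define U2 where "U2 = U \<inter> f -` U'"
  define D2 where "D2 = {\<phi> \<in> config_space LL. tuple_map ws2 \<phi> \<in> U2}"
  obtain E :: "nat set" and \<sigma> :: "(nat \<Rightarrow> 'a) \<Rightarrow> nat \<Rightarrow> ('v \<Rightarrow> 'a)" and \<sigma>i where
    E: "finite E" and hom: "homeomorphism (U \<times> E) D (\<lambda>(u, c). \<sigma> u c) \<sigma>i"
    and q\<sigma>: "\<forall>u\<in>U. \<forall>c\<in>E. tuple_map ws (\<sigma> u c) = u"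
    and an\<sigma>: "\<forall>c\<in>E. analytic_restriction {..<length ws} (verts L) (\<lambda>u. \<sigma> u c) U"
    using FL unfolding functional_on_def D_def by blast
  obtain E' :: "nat set" and \<tau> :: "(nat \<Rightarrow> 'a) \<Rightarrow> nat \<Rightarrow> ('w \<Rightarrow> 'a)" and \<tau>i where
    E': "finite E'" and hom': "homeomorphism (U' \<times> E') D' (\<lambda>(u, c). \<tau> u c) \<tau>i"
    and q\<tau>: "\<forall>u\<in>U'. \<forall>c\<in>E'. tuple_map ws' (\<tau> u c) = u"
    and an\<tau>: "\<forall>c\<in>E'. analytic_restriction {..<length ws'} (verts L') (\<lambda>u. \<tau> u c) U'"
    using FL' unfolding functional_on_def D'_def by blast
  have h1: "\<forall>x\<in>U \<times> E. \<sigma>i ((\<lambda>(u, c). \<sigma> u c) x) = x" "(\<lambda>(u, c). \<sigma> u c) ` (U \<times> E) = D"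
    "continuous_on (U \<times> E) (\<lambda>(u, c). \<sigma> u c)" "\<forall>y\<in>D. (\<lambda>(u, c). \<sigma> u c) (\<sigma>i y) = y"
    "\<sigma>i ` D = U \<times> E" "continuous_on D \<sigma>i"
    using hom unfolding homeomorphism_def by blast+
  have h1': "\<forall>x\<in>U' \<times> E'. \<tau>i ((\<lambda>(u, c). \<tau> u c) x) = x" "(\<lambda>(u, c). \<tau> u c) ` (U' \<times> E') = D'"
    "continuous_on (U' \<times> E') (\<lambda>(u, c). \<tau> u c)" "\<forall>y\<in>D'. (\<lambda>(u, c). \<tau> u c) (\<tau>i y) = y"
    "\<tau>i ` D' = U' \<times> E'" "continuous_on D' \<tau>i"
    using hom' unfolding homeomorphism_def by blast+
  have \<sigma>D: "\<sigma> u c \<in> D" if "u \<in> U" "c \<in> E" for u c using h1(2) that by force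
  have \<tau>D: "\<tau> u c \<in> D'" if "u \<in> U'" "c \<in> E'" for u c using h1'(2) that by force
  have \<sigma>inv1: "\<sigma>i (\<sigma> u c) = (u, c)" if "u \<in> U" "c \<in> E" for u c using h1(1) that by force
  have \<tau>inv1: "\<tau>i (\<tau> u c) = (u, c)" if "u \<in> U'" "c \<in> E'" for u c using h1'(1) that by force
  have \<sigma>i_in: "\<sigma>i \<phi> \<in> U \<times> E" if "\<phi> \<in> D" for \<phi> using h1(5) that by blast
  have \<tau>i_in: "\<tau>i \<psi> \<in> U' \<times> E'" if "\<psi> \<in> D'" for \<psi> using h1'(5) that by blast
  have \<sigma>inv2: "\<sigma> (fst (\<sigma>i \<phi>)) (snd (\<sigma>i \<phi>)) = \<phi>" if "\<phi> \<in> D" for \<phi>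
    using h1(4) that by (auto simp: case_prod_unfold)
  have \<tau>inv2: "\<tau> (fst (\<tau>i \<psi>)) (snd (\<tau>i \<psi>)) = \<psi>" if "\<psi> \<in> D'" for \<psi>
    using h1'(4) that by (auto simp: case_prod_unfold)
  have fst\<sigma>i: "fst (\<sigma>i \<phi>) = tuple_map ws \<phi>" if "\<phi> \<in> D" for \<phi>
    using q\<sigma> \<sigma>i_in[OF that] \<sigma>inv2[OF that] by (metis mem_Times_iff)
  have fst\<tau>i: "fst (\<tau>i \<psi>) = tuple_map ws' \<psi>" if "\<psi> \<in> D'" for \<psi>
    using q\<tau> \<tau>i_in[OF that] \<tau>inv2[OF that] by (metis mem_Times_iff)
  have DC: "D \<subseteq> config_space L" "D' \<subseteq> config_space L'" by (auto simp: D_def D'_def)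
  have fq: "f u = tuple_map vs (\<sigma> u c)" if "u \<in> U" "c \<in> E" for u c
    using qfL[of "\<sigma> u c"] \<sigma>D[OF that] DC q\<sigma> that by auto
  obtain u0 where u0: "u0 \<in> U2" using ne unfolding U2_def by auto
  obtain \<phi>0 where \<phi>0: "\<phi>0 \<in> config_space L" "tuple_map ws \<phi>0 = u0" using UC u0 unfolding U2_def by auto
  have "\<phi>0 \<in> D" using \<phi>0 u0 by (simp add: D_def U2_def)
  then obtain c0 where c0: "c0 \<in> E" using \<sigma>i_in by force
  have fcont: "continuous_on U f"
  proof -
    have cc: "continuous_on U (\<lambda>u. (u, c0))" by (intro continuous_intros)
    have ss: "(\<lambda>u. (u, c0)) ` U \<subseteq> U \<times> E" using c0 by auto
    have "continuous_on U (\<lambda>u. \<sigma> u c0)" using continuous_on_compose2[OF h1(3) cc ss] by simp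
    then have "continuous_on U (\<lambda>u. tuple_map vs (\<sigma> u c0))"
      by (rule continuous_on_compose2[OF cont_tuple]) auto
    then show ?thesis by (rule continuous_on_eq) (use fq c0 in auto)
  qed
  define E2 where "E2 = prod_encode ` (E \<times> E')"
  define \<sigma>2 where "\<sigma>2 u c = comb (\<sigma> u (fst (prod_decode c))) (\<tau> (f u) (snd (prod_decode c)))" for u c
  define \<sigma>2i where "\<sigma>2i \<phi> = (tuple_map ws2 \<phi>, prod_encode (snd (\<sigma>i (resL \<phi>)), snd (\<tau>i (resR \<phi>))))" for \<phi>
  have pt1: "\<sigma>2 u c \<in> D2 \<and> \<sigma>2i (\<sigma>2 u c) = (u, c)" if u: "u \<in> U2" and c: "c \<in> E2" for u c
  proof -
    obtain a b where ab: "c = prod_encode (a, b)" "a \<in> E" "b \<in> E'" using c unfolding E2_def by auto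
    have uU: "u \<in> U" and fu: "f u \<in> U'" using u by (auto simp: U2_def)
    have \<phi>: "\<sigma> u a \<in> config_space L" using \<sigma>D[OF uU ab(2)] DC by auto
    have \<psi>: "\<tau> (f u) b \<in> config_space L'" using \<tau>D[OF fu ab(3)] DC by auto
    have e: "tuple_map ws' (\<tau> (f u) b) = f (tuple_map ws (\<sigma> u a))"
      using q\<tau> fu ab(3) q\<sigma> uU ab(2) by auto
    note cf = comb_facts[OF \<phi> \<psi> e]
    have s2: "\<sigma>2 u c = comb (\<sigma> u a) (\<tau> (f u) b)" by (simp add: \<sigma>2_def ab)
    have q2: "tuple_map ws2 (\<sigma>2 u c) = u" using cf(4) q\<sigma> uU ab(2) s2 by simp
    show ?thesis
    proof
      show "\<sigma>2 u c \<in> D2" using cf(1) q2 u s2 by (simp add: D2_def)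
      show "\<sigma>2i (\<sigma>2 u c) = (u, c)"
        using q2 s2 cf(2,3) \<sigma>inv1[OF uU ab(2)] \<tau>inv1[OF fu ab(3)] ab(1) by (simp add: \<sigma>2i_def)
    qed
  qed
  have pt2: "\<sigma>2i \<phi> \<in> U2 \<times> E2 \<and> \<sigma>2 (fst (\<sigma>2i \<phi>)) (snd (\<sigma>2i \<phi>)) = \<phi>" if \<phi>2: "\<phi> \<in> D2" for \<phi>
  proof -
    have \<phi>C: "\<phi> \<in> config_space LL" and uU2: "tuple_map ws2 \<phi> \<in> U2" using \<phi>2 by (auto simp: D2_def)
    note rc = res_config[OF pc \<phi>C]
    define u where "u = tuple_map ws2 \<phi>"
    have uq: "tuple_map ws (resL \<phi>) = u" by (simp add: u_def q2_res)
    have uU: "u \<in> U" and fu: "f u \<in> U'" using uU2 by (auto simp: U2_def u_def)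
    have LD: "resL \<phi> \<in> D" using rc(1) uq uU by (simp add: D_def)
    have fuq: "tuple_map ws' (resR \<phi>) = f u"
      using res_compat_tuple[OF \<phi>C] qfL[OF rc(1)] uq by simp
    have RD: "resR \<phi> \<in> D'" using rc(2) fuq fu by (simp add: D'_def)
    define a where "a = snd (\<sigma>i (resL \<phi>))"
    define b where "b = snd (\<tau>i (resR \<phi>))"
    have a: "a \<in> E" using \<sigma>i_in[OF LD] by (auto simp: a_def)
    have b: "b \<in> E'" using \<tau>i_in[OF RD] by (auto simp: b_def)
    have s2i: "\<sigma>2i \<phi> = (u, prod_encode (a, b))" by (simp add: \<sigma>2i_def u_def a_def b_def)
    have e1: "\<sigma> u a = resL \<phi>" using \<sigma>inv2[OF LD] fst\<sigma>i[OF LD] uq by (simp add: a_def)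
    have e2: "\<tau> (f u) b = resR \<phi>" using \<tau>inv2[OF RD] fst\<tau>i[OF RD] fuq by (simp add: b_def)
    show ?thesis
    proof
      show "\<sigma>2i \<phi> \<in> U2 \<times> E2" using s2i uU2 a b by (auto simp: E2_def u_def)
      show "\<sigma>2 (fst (\<sigma>2i \<phi>)) (snd (\<sigma>2i \<phi>)) = \<phi>"
        using s2i e1 e2 comb_res[OF \<phi>C] by (simp add: \<sigma>2_def)
    qed
  qed
  have cont1: "continuous_on (U2 \<times> E2) (\<lambda>(u, c). \<sigma>2 u c)"
  proof -
    have dec: "prod_decode c \<in> E \<times> E'" if "c \<in> E2" for c using that by (auto simp: E2_def)
    have sn: "continuous_on (U2 \<times> E2) (\<lambda>x. snd x)" by (rule continuous_on_snd[OF continuous_on_id])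
    have d1: "continuous_on (U2 \<times> E2) (\<lambda>x. fst (prod_decode (snd x)))"
      using continuous_on_compose2[OF Topological_Spaces.continuous_on_discrete[where A=UNIV and f="\<lambda>n. fst (prod_decode n)"] sn] by simp
    have d2: "continuous_on (U2 \<times> E2) (\<lambda>x. snd (prod_decode (snd x)))"
      using continuous_on_compose2[OF Topological_Spaces.continuous_on_discrete[where A=UNIV and f="\<lambda>n. snd (prod_decode n)"] sn] by simp
    have cA: "continuous_on (U2 \<times> E2) (\<lambda>x. \<sigma> (fst x) (fst (prod_decode (snd x))))"
    proof -
      have cc: "continuous_on (U2 \<times> E2) (\<lambda>x. (fst x, fst (prod_decode (snd x))))"
        by (intro continuous_on_Pair continuous_on_fst continuous_on_id d1)
      have ss: "(\<lambda>x. (fst x, fst (prod_decode (snd x)))) ` (U2 \<times> E2) \<subseteq> U \<times> E"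
        using dec by (force simp: U2_def)
      show ?thesis using continuous_on_compose2[OF h1(3) cc ss] by (simp add: case_prod_unfold)
    qed
    have cB: "continuous_on (U2 \<times> E2) (\<lambda>x. \<tau> (f (fst x)) (snd (prod_decode (snd x))))"
    proof -
      have "continuous_on (U2 \<times> E2) (\<lambda>x. f (fst x))"
        by (rule continuous_on_compose2[OF fcont continuous_on_fst[OF continuous_on_id]]) (auto simp: U2_def)
      then have cc: "continuous_on (U2 \<times> E2) (\<lambda>x. (f (fst x), snd (prod_decode (snd x))))"
        by (intro continuous_on_Pair d2)
      have ss: "(\<lambda>x. (f (fst x), snd (prod_decode (snd x)))) ` (U2 \<times> E2) \<subseteq> U' \<times> E'"
        using dec by (force simp: U2_def)
      show ?thesis using continuous_on_compose2[OF h1'(3) cc ss] by (simp add: case_prod_unfold)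
    qed
    show ?thesis unfolding \<sigma>2_def case_prod_unfold by (rule cont_comb[OF cA cB])
  qed
  have cont2: "continuous_on D2 \<sigma>2i"
  proof -
    have RLD: "resL ` D2 \<subseteq> D" and RRD: "resR ` D2 \<subseteq> D'"
    proof -
      { fix \<phi> assume "\<phi> \<in> D2"
        then have "\<sigma>2i \<phi> \<in> U2 \<times> E2" using pt2 by blast
        note _ }
      show "resL ` D2 \<subseteq> D"
      proof
        fix x assume "x \<in> resL ` D2"
        then obtain \<phi> where \<phi>: "\<phi> \<in> D2" "x = resL \<phi>" by auto
        then have \<phi>C: "\<phi> \<in> config_space LL" and "tuple_map ws2 \<phi> \<in> U2" by (auto simp: D2_def)
        then show "x \<in> D" using res_config(1)[OF pc \<phi>C] \<phi>(2) by (simp add: D_def q2_res U2_def)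
      qed
      show "resR ` D2 \<subseteq> D'"
      proof
        fix x assume "x \<in> resR ` D2"
        then obtain \<phi> where \<phi>: "\<phi> \<in> D2" "x = resR \<phi>" by auto
        then have \<phi>C: "\<phi> \<in> config_space LL" and u: "tuple_map ws2 \<phi> \<in> U2" by (auto simp: D2_def)
        have "tuple_map ws' (resR \<phi>) = f (tuple_map ws2 \<phi>)"
          using res_compat_tuple[OF \<phi>C] qfL[OF res_config(1)[OF pc \<phi>C]] by (simp add: q2_res)
        then show "x \<in> D'" using res_config(2)[OF pc \<phi>C] \<phi>(2) u by (simp add: D'_def U2_def)
      qed
    qed
    have c1: "continuous_on D2 (\<lambda>\<phi>. snd (\<sigma>i (resL \<phi>)))"
      by (intro continuous_on_snd continuous_on_compose2[OF h1(6) cont_resL RLD])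
    have c2: "continuous_on D2 (\<lambda>\<phi>. snd (\<tau>i (resR \<phi>)))"
      by (intro continuous_on_snd continuous_on_compose2[OF h1'(6) cont_resR RRD])
    have "continuous_on D2 (\<lambda>\<phi>. prod_encode (snd (\<sigma>i (resL \<phi>)), snd (\<tau>i (resR \<phi>))))"
      using cont_nat2[OF c1 c2, of "\<lambda>a b. prod_encode (a, b)"] by simp
    then show ?thesis unfolding \<sigma>2i_def by (intro continuous_on_Pair cont_tuple)
  qed
  have homeo: "homeomorphism (U2 \<times> E2) D2 (\<lambda>(u, c). \<sigma>2 u c) \<sigma>2i"
  proof (rule homeomorphismI[OF cont1 cont2])
    show "(\<lambda>(u, c). \<sigma>2 u c) ` (U2 \<times> E2) \<subseteq> D2" using pt1 by auto
    show "\<sigma>2i ` D2 \<subseteq> U2 \<times> E2" using pt2 by blast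
    show "\<sigma>2i ((\<lambda>(u, c). \<sigma>2 u c) x) = x" if "x \<in> U2 \<times> E2" for x using pt1 that by auto
    show "(\<lambda>(u, c). \<sigma>2 u c) (\<sigma>2i y) = y" if "y \<in> D2" for y using pt2[OF that] by (simp add: case_prod_unfold)
  qed
  have qs2: "\<forall>u\<in>U2. \<forall>c\<in>E2. tuple_map ws2 (\<sigma>2 u c) = u"
  proof (intro ballI)
    fix u c assume "u \<in> U2" "c \<in> E2"
    then have "\<sigma>2i (\<sigma>2 u c) = (u, c)" using pt1 by blast
    then show "tuple_map ws2 (\<sigma>2 u c) = u" by (simp add: \<sigma>2i_def)
  qed
  have ans2: "\<forall>c\<in>E2. analytic_restriction {..<length ws2} (verts LL) (\<lambda>u. \<sigma>2 u c) U2"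
  proof
    fix c assume c: "c \<in> E2"
    obtain a b where ab: "c = prod_encode (a, b)" "a \<in> E" "b \<in> E'" using c unfolding E2_def by auto
    have "analytic_restriction {..<length ws} V2
            (\<lambda>u. comb (\<sigma> u a) (\<tau> (tuple_map vs (\<sigma> u a)) b)) U2"
      by (rule AR_glue[where Aa=U and Ab=U']) (use an\<sigma> an\<tau> ab fq \<sigma>D in \<open>auto simp: U2_def\<close>)
    then show "analytic_restriction {..<length ws2} (verts LL) (\<lambda>u. \<sigma>2 u c) U2"
      unfolding glue_simps length_map
      by (rule analytic_restriction_cong) (use fq ab in \<open>auto simp: \<sigma>2_def U2_def\<close>)
  qed
  have ani: "analytic_restriction (verts LL) {..<length ws2} (fst \<circ> \<sigma>2i) D2"
  proof -
    have "analytic_restriction V2 {..<length ws2} (tuple_map ws2) D2"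
    proof (rule AR_tuple[OF finite_V2])
      show "set ws2 \<subseteq> V2" using wsL0 by (auto intro!: cls_in)
      show "D2 \<subseteq> coord_space V2" by (auto simp: D2_def config_space_def coord_space_def glue_simps)
    qed
    then show ?thesis
      unfolding glue_simps by (rule analytic_restriction_cong) (simp add: \<sigma>2i_def)
  qed
  show ?thesis
    unfolding functional_on_def
  proof (intro conjI quasi2)
    show "U \<inter> f -` U' \<subseteq> tuple_map ws2 ` config_space LL" by (rule U2_sub)
    show "\<exists>(E::nat set) \<sigma> \<sigma>'. finite E \<and>
        homeomorphism ((U \<inter> f -` U') \<times> E) {\<phi> \<in> config_space LL. tuple_map ws2 \<phi> \<in> U \<inter> f -` U'}
          (\<lambda>(u, c). \<sigma> u c) \<sigma>' \<and>
        (\<forall>u\<in>U \<inter> f -` U'. \<forall>c\<in>E. tuple_map ws2 (\<sigma> u c) = u) \<and>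
        (\<forall>c\<in>E. analytic_restriction {..<length ws2} (verts LL) (\<lambda>u. \<sigma> u c) (U \<inter> f -` U')) \<and>
        analytic_restriction (verts LL) {..<length ws2} (fst \<circ> \<sigma>')
         {\<phi> \<in> config_space LL. tuple_map ws2 \<phi> \<in> U \<inter> f -` U'}"
    proof -
      have "finite E2" using E E' by (simp add: E2_def)
      moreover have "homeomorphism ((U \<inter> f -` U') \<times> E2) {\<phi> \<in> config_space LL. tuple_map ws2 \<phi> \<in> U \<inter> f -` U'}
          (\<lambda>(u, c). \<sigma>2 u c) \<sigma>2i" using homeo unfolding U2_def D2_def .
      moreover have "\<forall>u\<in>U \<inter> f -` U'. \<forall>c\<in>E2. tuple_map ws2 (\<sigma>2 u c) = u" using qs2 unfolding U2_def .
      moreover have "\<forall>c\<in>E2. analytic_restriction {..<length ws2} (verts LL) (\<lambda>u. \<sigma>2 u c) (U \<inter> f -` U')"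
        using ans2 unfolding U2_def .
      moreover have "analytic_restriction (verts LL) {..<length ws2} (fst \<circ> \<sigma>2i)
         {\<phi> \<in> config_space LL. tuple_map ws2 \<phi> \<in> U \<inter> f -` U'}" using ani unfolding U2_def D2_def .
      ultimately show ?thesis
        by (intro exI[where x=E2] exI[where x=\<sigma>2] exI[where x=\<sigma>2i] conjI) assumption+
    qed
  qed
qed


lemma strongly_part:
  assumes SL: "strongly_functional_on L ws vs f U" and SL': "strongly_functional_on L' ws' vs' g U'"
  shows "strongly_functional_on LL ws2 vs2 (g \<circ> f) (U \<inter> f -` U')"
proof -
  define C where "C = config_space L"
  define C' where "C' = config_space L'"
  define C2 where "C2 = config_space LL"
  define I2 where "I2 = tuple_map ws2 ` C2"
  obtain qi where hq: "homeomorphism C (tuple_map ws ` C) (tuple_map ws) qi"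
    and aqi: "analytic_restriction {..<length ws} (verts L) qi (tuple_map ws ` C)"
    using SL unfolding strongly_functional_on_def analytic_iso_def C_def by blast
  obtain qi' where hq': "homeomorphism C' (tuple_map ws' ` C') (tuple_map ws') qi'"
    and aqi': "analytic_restriction {..<length ws'} (verts L') qi' (tuple_map ws' ` C')"
    using SL' unfolding strongly_functional_on_def analytic_iso_def C'_def by blast
  have q1: "\<And>\<phi>. \<phi> \<in> C \<Longrightarrow> qi (tuple_map ws \<phi>) = \<phi>" and q2: "\<And>u. u \<in> tuple_map ws ` C \<Longrightarrow> qi u \<in> C"
    and q3: "continuous_on (tuple_map ws ` C) qi"
    using hq unfolding homeomorphism_def by blast+
  have q1': "\<And>\<phi>. \<phi> \<in> C' \<Longrightarrow> qi' (tuple_map ws' \<phi>) = \<phi>"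
    and q3': "continuous_on (tuple_map ws' ` C') qi'"
    using hq' unfolding homeomorphism_def by blast+
  have qq: "tuple_map ws (qi u) = u" if "u \<in> tuple_map ws ` C" for u
    using that q1 by auto
  define qi2 where "qi2 u = comb (qi u) (qi' (f u))" for u
  have fp: "f u = tuple_map vs (qi u)" if "u \<in> tuple_map ws ` C" for u
    using qfL[of "qi u"] q2[OF that] qq[OF that] by (simp add: C_def)
  have key: "qi2 (tuple_map ws2 \<phi>) = \<phi> \<and> tuple_map ws2 \<phi> \<in> tuple_map ws ` C \<and>
             f (tuple_map ws2 \<phi>) \<in> tuple_map ws' ` C'" if \<phi>: "\<phi> \<in> C2" for \<phi>
  proof -
    have \<phi>C: "\<phi> \<in> config_space LL" using \<phi> by (simp add: C2_def)
    note rc = res_config[OF pc \<phi>C]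
    have u: "tuple_map ws2 \<phi> = tuple_map ws (resL \<phi>)" by (rule q2_res)
    have fu: "f (tuple_map ws2 \<phi>) = tuple_map ws' (resR \<phi>)"
      using res_compat_tuple[OF \<phi>C] qfL[OF rc(1)] u by simp
    have a: "qi (tuple_map ws2 \<phi>) = resL \<phi>" using q1 rc(1) u by (simp add: C_def)
    have b: "qi' (f (tuple_map ws2 \<phi>)) = resR \<phi>" using q1' rc(2) fu by (simp add: C'_def)
    show ?thesis using a b comb_res[OF \<phi>C] u fu rc(1,2) by (auto simp: qi2_def C_def C'_def)
  qed
  have I2sub: "I2 \<subseteq> tuple_map ws ` C" and I2f: "\<And>u. u \<in> I2 \<Longrightarrow> f u \<in> tuple_map ws' ` C'"
    using key by (auto simp: I2_def)
  have homeo: "homeomorphism C2 I2 (tuple_map ws2) qi2"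
  proof (rule homeomorphismI)
    show "continuous_on C2 (tuple_map ws2)" by (rule cont_tuple)
    have c1: "continuous_on I2 qi" by (rule continuous_on_subset[OF q3 I2sub])
    have c2: "continuous_on I2 (\<lambda>u. qi' (tuple_map vs (qi u)))"
    proof -
      have "continuous_on I2 (\<lambda>u. tuple_map vs (qi u))"
        by (rule continuous_on_compose2[OF cont_tuple c1]) auto
      moreover have "(\<lambda>u. tuple_map vs (qi u)) ` I2 \<subseteq> tuple_map ws' ` C'"
        using I2f fp I2sub by force
      ultimately show ?thesis by (rule continuous_on_compose2[OF q3'])
    qed
    have c3: "continuous_on I2 (\<lambda>u. qi' (f u))"
      by (rule continuous_on_eq[OF c2]) (use fp I2sub in auto)
    show "continuous_on I2 qi2" unfolding qi2_def by (rule cont_comb[OF c1 c3])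
    show "tuple_map ws2 ` C2 \<subseteq> I2" by (simp add: I2_def)
    show "qi2 ` I2 \<subseteq> C2" using key by (auto simp: I2_def)
    show "qi2 (tuple_map ws2 x) = x" if "x \<in> C2" for x using key that by blast
    show "tuple_map ws2 (qi2 y) = y" if "y \<in> I2" for y using key that by (auto simp: I2_def)
  qed
  have a1: "analytic_restriction (verts LL) {..<length ws2} (tuple_map ws2) C2"
    unfolding glue_simps
  proof (rule AR_tuple[OF finite_V2])
    show "set ws2 \<subseteq> V2" using wsL0 by (auto intro!: cls_in)
    show "C2 \<subseteq> coord_space V2" by (auto simp: C2_def config_space_def coord_space_def glue_simps)
  qed
  have a2: "analytic_restriction {..<length ws2} (verts LL) qi2 I2"
  proof -
    have "analytic_restriction {..<length ws} V2 (\<lambda>u. comb (qi u) (qi' (tuple_map vs (qi u)))) I2"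
      by (rule AR_glue[where Aa="tuple_map ws ` C" and Ab="tuple_map ws' ` C'", OF aqi aqi' I2sub])
         (use I2f fp I2sub in force)
    then show ?thesis
      unfolding glue_simps length_map
      by (rule analytic_restriction_cong) (use fp I2sub in \<open>auto simp: qi2_def\<close>)
  qed
  show ?thesis
    unfolding strongly_functional_on_def analytic_iso_def
  proof (intro conjI quasi2 U2_sub)
    show "\<exists>h'. homeomorphism (config_space LL) (tuple_map ws2 ` config_space LL) (tuple_map ws2) h' \<and>
      analytic_restriction (verts LL) {..<length ws2} (tuple_map ws2) (config_space LL) \<and>
      analytic_restriction {..<length ws2} (verts LL) h' (tuple_map ws2 ` config_space LL)"
      using homeo a1 a2 unfolding C2_def I2_def by blast
  qed
qed

end


theorem lemma4p1:
  fixes L :: "('v, 'e, 'a::euclidean_space) linkage" and L' :: "('w, 'f, 'a) linkage"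
    and ws vs :: "'v list" and ws' vs' :: "'w list"
    and f g :: "(nat \<Rightarrow> 'a) \<Rightarrow> (nat \<Rightarrow> 'a)"
    and U U' :: "(nat \<Rightarrow> 'a) set" and k m l :: nat
  assumes "cabled_linkage L" and "cabled_linkage L'"
    and "length ws = k" and "length vs = m" and "length ws' = m" and "length vs' = l"
    and "U \<inter> f -` U' \<noteq> {}"
  shows "(functional_on L ws vs f U \<and> functional_on L' ws' vs' g U' \<longrightarrow>
            functional_on (glue L L' vs ws') (glue_inputs L L' vs ws' ws)
              (glue_outputs L L' vs ws' vs') (g \<circ> f) (U \<inter> f -` U')) \<and>
         (strongly_functional_on L ws vs f U \<and> strongly_functional_on L' ws' vs' g U' \<longrightarrow>
            strongly_functional_on (glue L L' vs ws') (glue_inputs L L' vs ws' ws)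
              (glue_outputs L L' vs ws' vs') (g \<circ> f) (U \<inter> f -` U'))"
proof (intro conjI impI)
  have cab: "cabled_linkage L" "cabled_linkage L'" by (fact assms(1), fact assms(2))
  have lens: "length ws' = length vs" using assms(4,5) by simp
  have ne: "U \<inter> f -` U' \<noteq> {}" by (fact assms(7))
  {
    assume H: "functional_on L ws vs f U \<and> functional_on L' ws' vs' g U'"
    then have FL: "functional_on L ws vs f U" and FL': "functional_on L' ws' vs' g U'" by auto
    have qL: "quasifunctional L ws vs f" and UC: "U \<subseteq> tuple_map ws ` config_space L"
      using FL unfolding functional_on_def by auto
    have qL': "quasifunctional L' ws' vs' g" and UC': "U' \<subseteq> tuple_map ws' ` config_space L'"
      using FL' unfolding functional_on_def by auto
    have "GS2 L L' vs ws' ws vs' f g U U'"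
      by (intro GS2.intro GS.intro GS2_axioms.intro cab lens qL qL' UC UC' ne)
         (use qL qL' in \<open>auto simp: quasifunctional_def\<close>)
    then interpret GS2 L L' vs ws' ws vs' f g U U' .
    show "functional_on (glue L L' vs ws') (glue_inputs L L' vs ws' ws)
              (glue_outputs L L' vs ws' vs') (g \<circ> f) (U \<inter> f -` U')"
      unfolding glue_inputs_eq glue_outputs_eq by (rule functional_part[OF FL FL'])
  }
  {
    assume H: "strongly_functional_on L ws vs f U \<and> strongly_functional_on L' ws' vs' g U'"
    then have SL: "strongly_functional_on L ws vs f U" and SL': "strongly_functional_on L' ws' vs' g U'" by auto
    have qL: "quasifunctional L ws vs f" and UC: "U \<subseteq> tuple_map ws ` config_space L"
      using SL unfolding strongly_functional_on_def by auto
    have qL': "quasifunctional L' ws' vs' g" and UC': "U' \<subseteq> tuple_map ws' ` config_space L'"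
      using SL' unfolding strongly_functional_on_def by auto
    have "GS2 L L' vs ws' ws vs' f g U U'"
      by (intro GS2.intro GS.intro GS2_axioms.intro cab lens qL qL' UC UC' ne)
         (use qL qL' in \<open>auto simp: quasifunctional_def\<close>)
    then interpret GS2 L L' vs ws' ws vs' f g U U' .
    show "strongly_functional_on (glue L L' vs ws') (glue_inputs L L' vs ws' ws)
              (glue_outputs L L' vs ws' vs') (g \<circ> f) (U \<inter> f -` U')"
      unfolding glue_inputs_eq glue_outputs_eq by (rule strongly_part[OF SL SL'])
  }
qed

end
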